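(* Let $\mathcal{X},\mathcal{Y}$ be finite sets with $2\le|\mathcal{X}|,|\mathcal{Y}|<\infty$ and $P_{X,Y}$ a joint pmf on $\mathcal{X}\times\mathcal{Y}$ with $P_X(x)>0$ for all $x$ and $P_Y(y)>0$ for all $y$. If $(X_1,Y_1),\dots,(X_n,Y_n)$ are i.i.d. with joint pmf $P_{X,Y}$, then $$\eta_{\chi^2}(P_{X_1^n},P_{Y_1^n|X_1^n})\le\eta_{\mathrm{KL}}(P_{X_1^n},P_{Y_1^n|X_1^n})\le\frac{\eta_{\chi^2}(P_{X_1^n},P_{Y_1^n|X_1^n})}{\min_{x\in\mathcal{X}}P_X(x)}.$$
   Context: $X_1^n=(X_1,\dots,X_n)$, $Y_1^n=(Y_1,\dots,Y_n)$. For a pair of finite-valued random variables $(U,V)$ with channel matrix $W$ of $P_{V|U}$ (column $u$ equal to $P_{V|U=u}$), the contraction coefficient for a divergence $D_\bullet$ is $\eta_\bullet(P_U,P_{V|U})=\sup\{D_\bullet(WR_U\|WP_U)/D_\bullet(R_U\|P_U): R_U \text{ a pmf},\ 0<D_\bullet(R_U\|P_U)<\infty\}$. $\eta_{\mathrm{KL}}$ uses the KL divergence $D(R\|P)=\sum R\log(R/P)$ (natural log) and $\eta_{\chi^2}$ uses $\chi^2(R\|P)=\sum (R-P)^2/P$. *)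

theory Defs
  imports "HOL-Analysis.Analysis" "HOL-Library.Extended_Real"
begin

definition is_pmf :: "'u set \<Rightarrow> ('u \<Rightarrow> real) \<Rightarrow> bool" where
  "is_pmf U R \<longleftrightarrow> (\<forall>u\<in>U. 0 \<le> R u) \<and> (\<Sum>u\<in>U. R u) = 1"

definition kl_div :: "'u set \<Rightarrow> ('u \<Rightarrow> real) \<Rightarrow> ('u \<Rightarrow> real) \<Rightarrow> ereal" where
  "kl_div U R P =
     (if \<exists>u\<in>U. R u > 0 \<and> P u = 0 then \<infinity>
      else ereal (\<Sum>u\<in>U. if R u = 0 then 0 else R u * ln (R u / P u)))"

definition chi2_div :: "'u set \<Rightarrow> ('u \<Rightarrow> real) \<Rightarrow> ('u \<Rightarrow> real) \<Rightarrow> ereal" where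
  "chi2_div U R P =
     (if \<exists>u\<in>U. R u \<noteq> P u \<and> P u = 0 then \<infinity>
      else ereal (\<Sum>u\<in>U. if P u = 0 then 0 else (R u - P u)^2 / P u))"

text \<open>Output distribution W R of channel W (W u v = P_{V|U}(v|u)) on input R.\<close>
definition channel_out :: "'u set \<Rightarrow> ('u \<Rightarrow> 'v \<Rightarrow> real) \<Rightarrow> ('u \<Rightarrow> real) \<Rightarrow> ('v \<Rightarrow> real)" where
  "channel_out U W R = (\<lambda>v. \<Sum>u\<in>U. W u v * R u)"

text \<open>Contraction coefficients (as extended reals; supremum of the empty set is -infinity).\<close>
definition eta_KL :: "'u set \<Rightarrow> 'v set \<Rightarrow> ('u \<Rightarrow> real) \<Rightarrow> ('u \<Rightarrow> 'v \<Rightarrow> real) \<Rightarrow> ereal" where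
  "eta_KL U V PU W = Sup {kl_div V (channel_out U W R) (channel_out U W PU) / kl_div U R PU
      | R. is_pmf U R \<and> 0 < kl_div U R PU \<and> kl_div U R PU < \<infinity>}"

definition eta_chi2 :: "'u set \<Rightarrow> 'v set \<Rightarrow> ('u \<Rightarrow> real) \<Rightarrow> ('u \<Rightarrow> 'v \<Rightarrow> real) \<Rightarrow> ereal" where
  "eta_chi2 U V PU W = Sup {chi2_div V (channel_out U W R) (channel_out U W PU) / chi2_div U R PU
      | R. is_pmf U R \<and> 0 < chi2_div U R PU \<and> chi2_div U R PU < \<infinity>}"

definition marg_X :: "('a::finite \<Rightarrow> 'b::finite \<Rightarrow> real) \<Rightarrow> 'a \<Rightarrow> real" where
  "marg_X P x = (\<Sum>y\<in>UNIV. P x y)"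

definition marg_Y :: "('a::finite \<Rightarrow> 'b::finite \<Rightarrow> real) \<Rightarrow> 'b \<Rightarrow> real" where
  "marg_Y P y = (\<Sum>x\<in>UNIV. P x y)"

text \<open>n-fold i.i.d. input law P_{X_1^n} on length-n lists, and the channel P_{Y_1^n|X_1^n}.\<close>
definition seqs :: "nat \<Rightarrow> 'a list set" where
  "seqs n = {xs. length xs = n}"

definition iid_input :: "('a::finite \<Rightarrow> 'b::finite \<Rightarrow> real) \<Rightarrow> nat \<Rightarrow> 'a list \<Rightarrow> real" where
  "iid_input P n xs = (\<Prod>i<n. marg_X P (xs ! i))"

definition iid_channel :: "('a::finite \<Rightarrow> 'b::finite \<Rightarrow> real) \<Rightarrow> nat \<Rightarrow> 'a list \<Rightarrow> 'b list \<Rightarrow> real" where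
  "iid_channel P n xs ys = (\<Prod>i<n. P (xs ! i) (ys ! i) / marg_X P (xs ! i))"

end

theory Submission
  imports Defs "HOL-Real_Asymp.Real_Asymp"
begin
lemma gibbs_term:
  fixes a m :: real
  assumes "0 \<le> a" "0 \<le> m" "a > 0 \<Longrightarrow> m > 0"
  shows "a - m \<le> a * ln (a / m)"
proof (cases "a = 0")
  case True then show ?thesis using assms by simp
next
  case False
  then have a: "a > 0" using assms by simp
  then have m: "m > 0" using assms by simp
  have "ln (m / a) \<le> m / a - 1" using a m by (intro ln_le_minus_one) simp
  then have "a * ln (m / a) \<le> m - a" using a by (simp add: field_simps)
  moreover have "ln (a / m) = - ln (m / a)" using a m by (simp add: ln_div)
  ultimately show ?thesis by simp
qed

lemma log_sum:
  fixes a b :: "'i \<Rightarrow> real"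
  assumes fin: "finite I" and a0: "\<And>i. i \<in> I \<Longrightarrow> 0 \<le> a i" and b0: "\<And>i. i \<in> I \<Longrightarrow> 0 \<le> b i"
    and ab: "\<And>i. i \<in> I \<Longrightarrow> a i > 0 \<Longrightarrow> b i > 0"
  shows "(\<Sum>i\<in>I. a i) * ln ((\<Sum>i\<in>I. a i) / (\<Sum>i\<in>I. b i)) \<le> (\<Sum>i\<in>I. a i * ln (a i / b i))"
proof -
  define A where "A = (\<Sum>i\<in>I. a i)"
  define B where "B = (\<Sum>i\<in>I. b i)"
  have A0: "A \<ge> 0" unfolding A_def by (rule sum_nonneg) (use a0 in auto)
  show ?thesis
  proof (cases "A = 0")
    case True
    then have "\<forall>i\<in>I. a i = 0" using sum_nonneg_eq_0_iff[OF fin, of a] a0 unfolding A_def by blast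
    then show ?thesis using True unfolding A_def by simp
  next
    case False
    then have A: "A > 0" using A0 by simp
    obtain j where j: "j \<in> I" "a j > 0"
    proof (rule ccontr)
      assume "\<not> thesis"
      then have "\<forall>i\<in>I. a i \<le> 0" using that by force
      then have "A \<le> 0" unfolding A_def by (intro sum_nonpos) auto
      then show False using A by simp
    qed
    have "b j \<le> B" unfolding B_def by (rule member_le_sum) (use j b0 fin in auto)
    then have B: "B > 0" using ab[OF j] by simp
    have eq: "\<And>i. i \<in> I \<Longrightarrow> a i * ln (a i / b i) - a i * ln (A / B) = a i * ln (a i / (b i * A / B))"
    proof -
      fix i assume i: "i \<in> I"
      show "a i * ln (a i / b i) - a i * ln (A / B) = a i * ln (a i / (b i * A / B))"
      proof (cases "a i = 0")
        case True then show ?thesis by simp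
      next
        case False
        then have ai: "a i > 0" using a0 i by force
        then have bi: "b i > 0" using ab i by blast
        have "ln (a i / (b i * A / B)) = ln (a i / b i) - ln (A / B)"
          using ai bi A B by (simp add: ln_div ln_mult)
        then show ?thesis by (simp add: right_diff_distrib)
      qed
    qed
    have "(\<Sum>i\<in>I. a i * ln (a i / b i)) - A * ln (A / B) = (\<Sum>i\<in>I. a i * ln (a i / b i) - a i * ln (A / B))"
      unfolding A_def by (simp add: sum_subtractf sum_distrib_right)
    also have "\<dots> = (\<Sum>i\<in>I. a i * ln (a i / (b i * A / B)))"
      by (rule sum.cong) (use eq in auto)
    also have "\<dots> \<ge> (\<Sum>i\<in>I. a i - b i * A / B)"
      apply (rule sum_mono)
      apply (rule gibbs_term)
      using a0 b0 ab A B by auto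
    also have "(\<Sum>i\<in>I. a i - b i * A / B) = A - B * A / B"
      unfolding sum_subtractf A_def B_def by (simp add: sum_divide_distrib[symmetric] sum_distrib_right[symmetric])
    also have "A - B * A / B = 0" using B by simp
    finally show ?thesis unfolding A_def B_def by simp
  qed
qed

lemma four_x_bound: fixes x :: real shows "4 * x * (1 - x) \<le> 1"
proof -
  have "0 \<le> (2*x-1)^2" by simp
  then show ?thesis by (simp add: power2_eq_square algebra_simps)
qed

lemma pinsker_bin:
  fixes a b :: real
  assumes b: "0 < b" "b \<le> a" and a1: "a \<le> 1"
  shows "2 * (a - b)^2 \<le> a * ln (a / b) + (1 - a) * ln ((1 - a) / (1 - b))"
proof (cases "a = b")
  case True then show ?thesis by simp
next
  case False
  then have ba: "b < a" using b by simp
  show ?thesis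
  proof (cases "a = 1")
    case True
    define g where "g = (\<lambda>x::real. - ln x - 2 * (1 - x)^2)"
    have "g 1 \<le> g b"
    proof (rule DERIV_nonpos_imp_nonincreasing[where f=g])
      show "b \<le> 1" using ba True by simp
      fix x assume x: "b \<le> x" "x \<le> 1"
      then have x0: "x > 0" using b by simp
      have "(g has_real_derivative (- (1 / x) + 4 * (1 - x))) (at x)"
        unfolding g_def
        by (rule derivative_eq_intros refl | simp add: x0)+
      moreover have "- (1 / x) + 4 * (1 - x) \<le> 0"
      proof -
        have "4 * x * (1 - x) \<le> 1" by (rule four_x_bound)
        then have "4 * (1 - x) \<le> 1 / x" using x0 by (simp add: field_simps)
        then show ?thesis by simp
      qed
      ultimately show "\<exists>y. (g has_real_derivative y) (at x) \<and> y \<le> 0" by blast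
    qed
    then have "2 * (1 - b)^2 \<le> - ln b" unfolding g_def by simp
    moreover have "ln (1 / b) = - ln b" using b by (simp add: ln_div)
    ultimately show ?thesis using True by simp
  next
    case False
    then have a1': "a < 1" using a1 by simp
    define g where "g = (\<lambda>x::real. - a * ln x - (1 - a) * ln (1 - x) - 2 * (a - x)^2)"
    have "g a \<le> g b"
    proof (rule DERIV_nonpos_imp_nonincreasing[where f=g])
      show "b \<le> a" using ba by simp
      fix x assume x: "b \<le> x" "x \<le> a"
      then have x0: "x > 0" "x < 1" using b a1' by simp_all
      have "(g has_real_derivative (- (a / x) + (1 - a) / (1 - x) + 4 * (a - x))) (at x)"
        unfolding g_def
        by (rule derivative_eq_intros refl | simp add: x0)+
      moreover have "- (a / x) + (1 - a) / (1 - x) + 4 * (a - x) \<le> 0"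
      proof -
        have xx: "x * (1 - x) > 0" using x0 by simp
        have e: "- (a / x) + (1 - a) / (1 - x) = - ((a - x) / (x * (1 - x)))"
          using x0 by (simp add: field_simps)
        have "4 * x * (1 - x) \<le> 1" by (rule four_x_bound)
        then have "4 \<le> 1 / (x * (1 - x))" using xx by (simp add: field_simps)
        then have "(a - x) * 4 \<le> (a - x) * (1 / (x * (1 - x)))"
          using x by (intro mult_left_mono) auto
        then show ?thesis unfolding e by simp
      qed
      ultimately show "\<exists>y. (g has_real_derivative y) (at x) \<and> y \<le> 0" by blast
    qed
    then have ineq: "- a * ln a - (1 - a) * ln (1 - a) \<le> - a * ln b - (1 - a) * ln (1 - b) - 2 * (a - b)^2"
      unfolding g_def by simp
    have l1: "ln (a / b) = ln a - ln b" using b ba by (simp add: ln_div)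
    have l2: "ln ((1 - a) / (1 - b)) = ln (1 - a) - ln (1 - b)" using a1' ba by (simp add: ln_div)
    show ?thesis using ineq unfolding l1 l2 by (simp add: right_diff_distrib)
  qed
qed

definition KLr :: "'u set \<Rightarrow> ('u \<Rightarrow> real) \<Rightarrow> ('u \<Rightarrow> real) \<Rightarrow> real" where
  "KLr U r p = (\<Sum>u\<in>U. r u * ln (r u / p u))"
definition CHr :: "'u set \<Rightarrow> ('u \<Rightarrow> real) \<Rightarrow> ('u \<Rightarrow> real) \<Rightarrow> real" where
  "CHr U r p = (\<Sum>u\<in>U. (r u - p u)^2 / p u)"
definition pospmf :: "'u set \<Rightarrow> ('u \<Rightarrow> real) \<Rightarrow> bool" where
  "pospmf U p \<longleftrightarrow> (\<forall>u\<in>U. p u > 0) \<and> sum p U = 1"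

lemma kl_div_eq: "\<forall>u\<in>U. p u > 0 \<Longrightarrow> kl_div U r p = ereal (KLr U r p)"
  unfolding kl_div_def KLr_def by (auto intro!: sum.cong)

lemma chi2_div_eq: "\<forall>u\<in>U. p u > 0 \<Longrightarrow> chi2_div U r p = ereal (CHr U r p)"
  unfolding chi2_div_def CHr_def by (auto intro!: sum.cong)

lemma KLr_nonneg:
  assumes "finite U" "is_pmf U r" "pospmf U p"
  shows "0 \<le> KLr U r p"
proof -
  have "(\<Sum>u\<in>U. r u - p u) \<le> KLr U r p"
    unfolding KLr_def using assms by (intro sum_mono gibbs_term) (auto simp: is_pmf_def pospmf_def less_imp_le)
  moreover have "(\<Sum>u\<in>U. r u - p u) = 0" using assms by (simp add: sum_subtractf is_pmf_def pospmf_def)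
  ultimately show ?thesis by simp
qed

lemma KLr_le_CHr:
  assumes "finite U" "is_pmf U r" "pospmf U p"
  shows "KLr U r p \<le> CHr U r p"
proof -
  have "KLr U r p \<le> (\<Sum>u\<in>U. r u * (r u / p u - 1))"
    unfolding KLr_def
  proof (rule sum_mono)
    fix u assume u: "u \<in> U"
    then have p: "p u > 0" and r: "r u \<ge> 0" using assms by (auto simp: is_pmf_def pospmf_def)
    show "r u * ln (r u / p u) \<le> r u * (r u / p u - 1)"
    proof (cases "r u = 0")
      case False
      then have "r u / p u > 0" using p r by simp
      then have "ln (r u / p u) \<le> r u / p u - 1" by (rule ln_le_minus_one)
      then show ?thesis using r by (intro mult_left_mono) auto
    qed simp
  qed
  also have "\<dots> = CHr U r p"
  proof -
    have "\<And>u. u \<in> U \<Longrightarrow> r u * (r u / p u - 1) = (r u - p u)^2 / p u + (r u - p u)"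
      using assms by (auto simp: pospmf_def field_simps power2_eq_square)
    then have "(\<Sum>u\<in>U. r u * (r u / p u - 1)) = (\<Sum>u\<in>U. (r u - p u)^2 / p u + (r u - p u))"
      by (rule sum.cong[OF refl])
    also have "\<dots> = CHr U r p + (\<Sum>u\<in>U. r u - p u)" unfolding CHr_def by (rule sum.distrib)
    also have "(\<Sum>u\<in>U. r u - p u) = 0" using assms by (simp add: sum_subtractf is_pmf_def pospmf_def)
    finally show ?thesis by simp
  qed
  finally show ?thesis .
qed

lemma sum_sq_le_sq_sum:
  fixes x :: "'i \<Rightarrow> real"
  assumes "finite I" "\<And>i. i \<in> I \<Longrightarrow> 0 \<le> x i"
  shows "(\<Sum>i\<in>I. (x i)^2) \<le> (\<Sum>i\<in>I. x i)^2"
proof -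
  have "(\<Sum>i\<in>I. (x i)^2) \<le> (\<Sum>i\<in>I. x i * (\<Sum>j\<in>I. x j))"
  proof (rule sum_mono)
    fix i assume i: "i \<in> I"
    have "x i \<le> (\<Sum>j\<in>I. x j)" using assms i by (intro member_le_sum) auto
    then show "(x i)^2 \<le> x i * (\<Sum>j\<in>I. x j)" using assms i
      by (simp add: power2_eq_square mult_left_mono)
  qed
  also have "\<dots> = (\<Sum>i\<in>I. x i)^2" by (simp add: sum_distrib_right power2_eq_square)
  finally show ?thesis .
qed

lemma l2_le_KLr:
  assumes fin: "finite U" and r: "is_pmf U r" and p: "pospmf U p"
  shows "(\<Sum>u\<in>U. (r u - p u)^2) \<le> KLr U r p"
proof -
  have r0: "\<And>u. u \<in> U \<Longrightarrow> 0 \<le> r u" and rs: "sum r U = 1" using r by (auto simp: is_pmf_def)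
  have p0: "\<And>u. u \<in> U \<Longrightarrow> 0 < p u" and ps: "sum p U = 1" using p by (auto simp: pospmf_def)
  define S where "S = {u\<in>U. p u \<le> r u}"
  define T where "T = U - S"
  have SU: "S \<subseteq> U" "finite S" "finite T" "S \<inter> T = {}" "S \<union> T = U" using fin by (auto simp: S_def T_def)
  define a where "a = sum r S"
  define b where "b = sum p S"
  have split: "\<And>f. sum f U = sum f S + sum f T"
    using sum.union_disjoint[OF SU(2) SU(3) SU(4)] SU(5) by simp
  have ra: "sum r T = 1 - a" using rs split[of r] unfolding a_def by simp
  have pb: "sum p T = 1 - b" using ps split[of p] unfolding b_def by simp
  have ab: "b \<le> a" unfolding a_def b_def by (rule sum_mono) (auto simp: S_def)
  have "S \<noteq> {}"
  proof
    assume "S = {}"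
    then have "\<forall>u\<in>U. r u < p u" by (auto simp: S_def)
    moreover have "U \<noteq> {}" using ps by auto
    ultimately have "sum r U < sum p U" using fin by (intro sum_strict_mono) auto
    then show False using rs ps by simp
  qed
  then obtain s where s: "s \<in> S" by blast
  have "p s \<le> b" unfolding b_def using SU s p0 by (intro member_le_sum) (auto intro: less_imp_le)
  then have b0: "0 < b" using p0[of s] s SU by auto
  have "0 \<le> sum r T" using r0 by (intro sum_nonneg) (auto simp: T_def)
  then have a1: "a \<le> 1" using ra by simp
  have "(\<Sum>u\<in>U. (r u - p u)^2) = (\<Sum>u\<in>S. (r u - p u)^2) + (\<Sum>u\<in>T. (p u - r u)^2)"
    using split[of "\<lambda>u. (r u - p u)^2"] by (simp add: power2_commute)
  also have "\<dots> \<le> (\<Sum>u\<in>S. r u - p u)^2 + (\<Sum>u\<in>T. p u - r u)^2"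
    apply (intro add_mono sum_sq_le_sq_sum)
    using SU by (auto simp: S_def T_def)
  also have "\<dots> = 2 * (a - b)^2"
  proof -
    have "(\<Sum>u\<in>S. r u - p u) = a - b" by (simp add: sum_subtractf a_def b_def)
    moreover have "(\<Sum>u\<in>T. p u - r u) = a - b" using ra pb by (simp add: sum_subtractf)
    ultimately show ?thesis by simp
  qed
  also have "\<dots> \<le> a * ln (a / b) + (1 - a) * ln ((1 - a) / (1 - b))"
    using pinsker_bin b0 ab a1 by blast
  also have "\<dots> \<le> (\<Sum>u\<in>S. r u * ln (r u / p u)) + (\<Sum>u\<in>T. r u * ln (r u / p u))"
  proof (rule add_mono)
    show "a * ln (a / b) \<le> (\<Sum>u\<in>S. r u * ln (r u / p u))"
      unfolding a_def b_def using SU r0 p0 by (intro log_sum) (auto intro: less_imp_le)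
    show "(1 - a) * ln ((1 - a) / (1 - b)) \<le> (\<Sum>u\<in>T. r u * ln (r u / p u))"
      unfolding ra[symmetric] pb[symmetric] using SU r0 p0 by (intro log_sum) (auto intro: less_imp_le)
  qed
  also have "\<dots> = KLr U r p" unfolding KLr_def by (rule split[symmetric])
  finally show ?thesis .
qed

lemma CHr_le_KLr:
  assumes fin: "finite U" and r: "is_pmf U r" and p: "pospmf U p"
    and m: "m > 0" "\<And>u. u \<in> U \<Longrightarrow> m \<le> p u"
  shows "CHr U r p \<le> KLr U r p / m"
proof -
  have "CHr U r p \<le> (\<Sum>u\<in>U. (r u - p u)^2 / m)"
    unfolding CHr_def
  proof (rule sum_mono)
    fix u assume "u \<in> U"
    then have "m \<le> p u" using m by simp
    then show "(r u - p u)^2 / p u \<le> (r u - p u)^2 / m" using m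
      by (intro divide_left_mono) auto
  qed
  also have "\<dots> = (\<Sum>u\<in>U. (r u - p u)^2) / m" by (simp add: sum_divide_distrib)
  also have "\<dots> \<le> KLr U r p / m" using l2_le_KLr[OF fin r p] m by (intro divide_right_mono) auto
  finally show ?thesis .
qed

lemma CHr_nonneg: "\<forall>u\<in>U. p u > 0 \<Longrightarrow> 0 \<le> CHr U r p"
  unfolding CHr_def by (intro sum_nonneg) auto

lemma CHr_zero:
  assumes "finite U" "\<forall>u\<in>U. p u > 0" "CHr U r p = 0" "u \<in> U"
  shows "r u = p u"
proof -
  have nn: "\<forall>x\<in>U. 0 \<le> (r x - p x)^2 / p x" using assms(2) by auto
  have "(r u - p u)^2 / p u = 0"
    using assms(1,3,4) sum_nonneg_eq_0_iff[of U "\<lambda>u. (r u - p u)^2 / p u"] nn unfolding CHr_def by auto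
  then show ?thesis using assms by auto
qed

definition Dt :: "'u set \<Rightarrow> ('u \<Rightarrow> real) \<Rightarrow> ('u \<Rightarrow> real) \<Rightarrow> real" where
  "Dt U r p = (\<Sum>u\<in>U. r u * ln (r u / (sum r U * p u)))"

definition stoch :: "'u set \<Rightarrow> 'v set \<Rightarrow> ('u \<Rightarrow> 'v \<Rightarrow> real) \<Rightarrow> bool" where
  "stoch U V W \<longleftrightarrow> (\<forall>u\<in>U. \<forall>v\<in>V. 0 \<le> W u v) \<and> (\<forall>u\<in>U. (\<Sum>v\<in>V. W u v) = 1)"

definition sdpi :: "'u set \<Rightarrow> 'v set \<Rightarrow> ('u \<Rightarrow> real) \<Rightarrow> ('u \<Rightarrow> 'v \<Rightarrow> real) \<Rightarrow> real \<Rightarrow> bool" where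
  "sdpi U V P W c \<longleftrightarrow> (\<forall>r. (\<forall>u\<in>U. 0 \<le> r u) \<longrightarrow>
      Dt V (channel_out U W r) (channel_out U W P) \<le> c * Dt U r P)"

lemma xln_split:
  fixes x y z w :: real
  assumes "0 \<le> x" "x > 0 \<Longrightarrow> y > 0 \<and> z > 0 \<and> z / y = w"
  shows "x * ln (x / y) = x * ln (x / z) + x * ln w"
proof (cases "x = 0")
  case False
  then have x: "x > 0" using assms by simp
  then have y: "y > 0" and z: "z > 0" and w: "z / y = w" using assms by auto
  have "ln (x / y) = ln (x / z) + ln (z / y)"
    using x y z by (simp add: ln_div)
  then show ?thesis using w by (simp add: distrib_left)
qed simp

lemma channel_out_mass:
  assumes "finite U" "finite V" "stoch U V W"
  shows "sum (channel_out U W r) V = sum r U"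
proof -
  have "sum (channel_out U W r) V = (\<Sum>u\<in>U. r u * (\<Sum>v\<in>V. W u v))"
    unfolding channel_out_def by (subst sum.swap) (simp add: sum_distrib_left mult.commute)
  also have "\<dots> = sum r U" using assms by (simp add: stoch_def)
  finally show ?thesis .
qed

lemma channel_out_nonneg:
  assumes "stoch U V W" "\<forall>u\<in>U. 0 \<le> r u" "v \<in> V"
  shows "0 \<le> channel_out U W r v"
  unfolding channel_out_def using assms by (intro sum_nonneg) (auto simp: stoch_def)

lemma channel_out_pos:
  assumes "finite U" "stoch U V W" "\<forall>u\<in>U. 0 \<le> r u" "v \<in> V" "u \<in> U" "W u v > 0" "r u > 0"
  shows "0 < channel_out U W r v"
proof -
  have "W u v * r u \<le> channel_out U W r v"
    unfolding channel_out_def using assms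
    by (intro member_le_sum[where f = "\<lambda>u. W u v * r u"]) (auto simp: stoch_def)
  moreover have "W u v * r u > 0" using assms by simp
  ultimately show ?thesis by simp
qed

lemma Dt_eq: "sum r U = M \<Longrightarrow> Dt U r p = (\<Sum>u\<in>U. r u * ln (r u / (M * p u)))"
  unfolding Dt_def by simp

lemma Dt_zero:
  assumes "\<forall>u\<in>U. r u = 0" shows "Dt U r p = 0"
  unfolding Dt_def using assms by simp

lemma dpi:
  assumes fin: "finite U" "finite V" and W: "stoch U V W" and P: "\<forall>u\<in>U. P u > 0"
    and r: "\<forall>u\<in>U. 0 \<le> r u"
  shows "Dt V (channel_out U W r) (channel_out U W P) \<le> Dt U r P"
proof -
  define M where "M = sum r U"
  have W0: "\<And>u v. u \<in> U \<Longrightarrow> v \<in> V \<Longrightarrow> 0 \<le> W u v" using W by (auto simp: stoch_def)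
  have Ms: "sum (channel_out U W r) V = M" unfolding M_def by (rule channel_out_mass[OF fin W])
  have rM: "\<And>u. u \<in> U \<Longrightarrow> r u \<le> M" unfolding M_def using fin r by (intro member_le_sum) auto
  have step: "channel_out U W r v * ln (channel_out U W r v / (M * channel_out U W P v))
      \<le> (\<Sum>u\<in>U. (W u v * r u) * ln ((W u v * r u) / (M * (W u v * P u))))" if v: "v \<in> V" for v
  proof -
    have "channel_out U W r v * ln (channel_out U W r v / (M * channel_out U W P v))
       = (\<Sum>u\<in>U. W u v * r u) * ln ((\<Sum>u\<in>U. W u v * r u) / (\<Sum>u\<in>U. M * (W u v * P u)))"
      unfolding channel_out_def by (simp add: sum_distrib_left)
    also have "\<dots> \<le> (\<Sum>u\<in>U. (W u v * r u) * ln ((W u v * r u) / (M * (W u v * P u))))"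
    proof (rule log_sum[OF fin(1)])
      fix u assume u: "u \<in> U"
      show "0 \<le> W u v * r u" using W0[OF u v] r u by simp
      have "0 \<le> M" using rM[OF u] bspec[OF r u] by simp
      then show "0 \<le> M * (W u v * P u)" using W0[OF u v] bspec[OF P u] by simp
      assume "0 < W u v * r u"
      then have "W u v > 0" "r u > 0" using W0[OF u v] r u by (auto simp: zero_less_mult_iff)
      moreover then have "M > 0" using rM[OF u] by simp
      ultimately show "0 < M * (W u v * P u)" using bspec[OF P u] by simp
    qed
    finally show ?thesis .
  qed
  have "Dt V (channel_out U W r) (channel_out U W P)
      = (\<Sum>v\<in>V. channel_out U W r v * ln (channel_out U W r v / (M * channel_out U W P v)))"
    by (rule Dt_eq[OF Ms])
  also have "\<dots> \<le> (\<Sum>v\<in>V. \<Sum>u\<in>U. (W u v * r u) * ln ((W u v * r u) / (M * (W u v * P u))))"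
    by (rule sum_mono) (rule step)
  also have "\<dots> = (\<Sum>v\<in>V. \<Sum>u\<in>U. W u v * (r u * ln (r u / (M * P u))))"
  proof (intro sum.cong refl)
    fix v u assume v: "v \<in> V" and u: "u \<in> U"
    show "(W u v * r u) * ln ((W u v * r u) / (M * (W u v * P u))) = W u v * (r u * ln (r u / (M * P u)))"
    proof (cases "W u v = 0")
      case False
      then have "(W u v * r u) / (M * (W u v * P u)) = r u / (M * P u)" by simp
      then show ?thesis by simp
    qed simp
  qed
  also have "\<dots> = (\<Sum>u\<in>U. (r u * ln (r u / (M * P u))) * (\<Sum>v\<in>V. W u v))"
    by (subst sum.swap) (simp add: sum_distrib_right mult.commute)
  also have "\<dots> = (\<Sum>u\<in>U. r u * ln (r u / (M * P u)))"
    using W by (simp add: stoch_def)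
  also have "\<dots> = Dt U r P" using Dt_eq[of r U M P] M_def by simp
  finally show ?thesis .
qed

lemma sdpi_from_pmf:
  assumes fin: "finite U" "finite V" and W: "stoch U V W" and P: "\<forall>u\<in>U. P u > 0"
    and Q: "\<forall>v\<in>V. channel_out U W P v > 0"
    and H: "\<And>r. is_pmf U r \<Longrightarrow> KLr V (channel_out U W r) (channel_out U W P) \<le> c * KLr U r P"
  shows "sdpi U V P W c"
  unfolding sdpi_def
proof (intro allI impI)
  fix r :: "_ \<Rightarrow> real" assume r: "\<forall>u\<in>U. 0 \<le> r u"
  define M where "M = sum r U"
  have M0: "M \<ge> 0" unfolding M_def using r by (intro sum_nonneg) auto
  show "Dt V (channel_out U W r) (channel_out U W P) \<le> c * Dt U r P"
  proof (cases "M = 0")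
    case True
    then have z: "\<forall>u\<in>U. r u = 0" using sum_nonneg_eq_0_iff[OF fin(1)] r unfolding M_def by blast
    then have "\<forall>v\<in>V. channel_out U W r v = 0" unfolding channel_out_def by simp
    then show ?thesis using Dt_zero z by (metis mult_zero_right order_refl)
  next
    case False
    then have Mp: "M > 0" using M0 by simp
    define r' where "r' = (\<lambda>u. r u / M)"
    have pmf: "is_pmf U r'" unfolding is_pmf_def r'_def using r Mp
      by (auto simp: sum_divide_distrib[symmetric] M_def[symmetric])
    have rr: "\<And>u. r u = M * r' u" unfolding r'_def using Mp by simp
    have co: "\<And>v. channel_out U W r v = M * channel_out U W r' v"
      unfolding channel_out_def rr by (simp add: sum_distrib_left algebra_simps)
    have Ms: "sum (channel_out U W r) V = M" unfolding M_def by (rule channel_out_mass[OF fin W])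
    have "Dt U r P = (\<Sum>u\<in>U. r u * ln (r u / (M * P u)))" using Dt_eq M_def by blast
    also have "\<dots> = (\<Sum>u\<in>U. M * (r' u * ln (r' u / P u)))"
      by (intro sum.cong refl) (simp add: rr Mp)
    also have "\<dots> = M * KLr U r' P" unfolding KLr_def by (simp add: sum_distrib_left)
    finally have e1: "Dt U r P = M * KLr U r' P" .
    have "Dt V (channel_out U W r) (channel_out U W P)
        = (\<Sum>v\<in>V. channel_out U W r v * ln (channel_out U W r v / (M * channel_out U W P v)))"
      using Dt_eq[OF Ms] by blast
    also have "\<dots> = (\<Sum>v\<in>V. M * (channel_out U W r' v * ln (channel_out U W r' v / channel_out U W P v)))"
      by (intro sum.cong refl) (simp add: co Mp)
    also have "\<dots> = M * KLr V (channel_out U W r') (channel_out U W P)" unfolding KLr_def by (simp add: sum_distrib_left)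
    finally have e2: "Dt V (channel_out U W r) (channel_out U W P) = M * KLr V (channel_out U W r') (channel_out U W P)" .
    show ?thesis unfolding e1 e2 using H[OF pmf] Mp by (simp add: mult_left_mono)
  qed
qed

lemma sum_pair: "(\<Sum>u\<in>A\<times>B. f u) = (\<Sum>a\<in>A. \<Sum>b\<in>B. f (a,b))"
  by (subst sum.cartesian_product) simp

lemma sdpi_prod:
  fixes W1 :: "'a \<Rightarrow> 'y \<Rightarrow> real" and W2 :: "'b \<Rightarrow> 'z \<Rightarrow> real"
  assumes fin: "finite A" "finite B" "finite Y" "finite Z"
    and W1: "stoch A Y W1" and W2: "stoch B Z W2"
    and P1: "\<forall>a\<in>A. P1 a > 0" and P2: "\<forall>b\<in>B. P2 b > 0"
    and Q1: "\<forall>y\<in>Y. channel_out A W1 P1 y > 0" and Q2: "\<forall>z\<in>Z. channel_out B W2 P2 z > 0"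
    and S1: "sdpi A Y P1 W1 c" and S2: "sdpi B Z P2 W2 c" and c1: "c \<le> 1"
  shows "sdpi (A \<times> B) (Y \<times> Z) (\<lambda>(a,b). P1 a * P2 b) (\<lambda>(a,b) (y,z). W1 a y * W2 b z) c"
  unfolding sdpi_def
proof (intro allI impI)
  fix r :: "'a \<times> 'b \<Rightarrow> real"
  assume r: "\<forall>u\<in>A \<times> B. 0 \<le> r u"
  define W where "W = (\<lambda>(a,b) (y,z). W1 a y * W2 b z)"
  define P where "P = (\<lambda>(a,b). P1 a * P2 b)"
  define R where "R = (\<lambda>a b. r (a,b))"
  define Q1f where "Q1f = channel_out A W1 P1"
  define Q2f where "Q2f = channel_out B W2 P2"
  define T where "T = (\<lambda>y b. \<Sum>a\<in>A. W1 a y * R a b)"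
  define SY where "SY = (\<lambda>y. \<Sum>b\<in>B. T y b)"
  define RB where "RB = (\<lambda>b. \<Sum>a\<in>A. R a b)"
  define M where "M = (\<Sum>b\<in>B. RB b)"
  define S where "S = channel_out (A \<times> B) W r"
  define Q where "Q = channel_out (A \<times> B) W P"
  have W10: "\<And>a y. a \<in> A \<Longrightarrow> y \<in> Y \<Longrightarrow> 0 \<le> W1 a y" using W1 by (auto simp: stoch_def)
  have W20: "\<And>b z. b \<in> B \<Longrightarrow> z \<in> Z \<Longrightarrow> 0 \<le> W2 b z" using W2 by (auto simp: stoch_def)
  have W1s: "\<And>a. a \<in> A \<Longrightarrow> (\<Sum>y\<in>Y. W1 a y) = 1" using W1 by (auto simp: stoch_def)
  have W2s: "\<And>b. b \<in> B \<Longrightarrow> (\<Sum>z\<in>Z. W2 b z) = 1" using W2 by (auto simp: stoch_def)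
  have R0: "\<And>a b. a \<in> A \<Longrightarrow> b \<in> B \<Longrightarrow> 0 \<le> R a b" using r by (auto simp: R_def)
  have P10: "\<And>a. a \<in> A \<Longrightarrow> 0 < P1 a" using P1 by auto
  have P20: "\<And>b. b \<in> B \<Longrightarrow> 0 < P2 b" using P2 by auto
  have Q10: "\<And>y. y \<in> Y \<Longrightarrow> 0 < Q1f y" using Q1 by (auto simp: Q1f_def)
  have Q20: "\<And>z. z \<in> Z \<Longrightarrow> 0 < Q2f z" using Q2 by (auto simp: Q2f_def)
  have T0: "\<And>y b. y \<in> Y \<Longrightarrow> b \<in> B \<Longrightarrow> 0 \<le> T y b"
    unfolding T_def using W10 R0 by (intro sum_nonneg) auto
  have Tch: "\<And>b. (\<lambda>y. T y b) = channel_out A W1 (\<lambda>a. R a b)"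
    unfolding T_def channel_out_def by simp
  have F1: "\<And>b. b \<in> B \<Longrightarrow> (\<Sum>y\<in>Y. T y b) = RB b"
  proof -
    fix b assume b: "b \<in> B"
    have "(\<Sum>y\<in>Y. T y b) = (\<Sum>a\<in>A. R a b * (\<Sum>y\<in>Y. W1 a y))"
      unfolding T_def by (subst sum.swap) (simp add: sum_distrib_left mult.commute)
    also have "\<dots> = RB b" unfolding RB_def using W1s by simp
    finally show "(\<Sum>y\<in>Y. T y b) = RB b" .
  qed
  have Mr: "sum r (A \<times> B) = M"
    unfolding M_def RB_def R_def sum_pair by (rule sum.swap)
  have F3: "\<And>y z. S (y,z) = channel_out B W2 (T y) z"
    unfolding S_def channel_out_def sum_pair W_def T_def
    by (subst sum.swap) (simp add: sum_distrib_left R_def algebra_simps)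
  have Sch: "\<And>y. (\<lambda>z. S (y,z)) = channel_out B W2 (T y)" using F3 by auto
  have F4: "\<And>y z. Q (y,z) = Q1f y * Q2f z"
    unfolding Q_def channel_out_def sum_pair W_def P_def Q1f_def Q2f_def
    by (simp add: sum_product algebra_simps)
  have F5: "\<And>y. y \<in> Y \<Longrightarrow> (\<Sum>z\<in>Z. S (y,z)) = SY y"
    unfolding F3 SY_def by (rule channel_out_mass[OF fin(2) fin(4) W2])
  have F6: "(\<Sum>y\<in>Y. SY y) = M"
    unfolding SY_def M_def by (subst sum.swap) (simp add: F1)
  have MS: "sum S (Y \<times> Z) = M" unfolding sum_pair using F5 F6 by simp
  have S0: "\<And>y z. y \<in> Y \<Longrightarrow> z \<in> Z \<Longrightarrow> 0 \<le> S (y,z)"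
    unfolding F3 by (rule channel_out_nonneg[OF W2]) (use T0 in auto)
  have SY0: "\<And>y. y \<in> Y \<Longrightarrow> 0 \<le> SY y" unfolding SY_def using T0 by (intro sum_nonneg) auto
  have RB0: "\<And>b. b \<in> B \<Longrightarrow> 0 \<le> RB b" unfolding RB_def using R0 by (intro sum_nonneg) auto
  have SleSY: "\<And>y z. y \<in> Y \<Longrightarrow> z \<in> Z \<Longrightarrow> S (y,z) \<le> SY y"
    unfolding F5[symmetric] using S0 fin by (intro member_le_sum[where f = "\<lambda>z. S (_, z)"]) auto
  have TleSY: "\<And>y b. y \<in> Y \<Longrightarrow> b \<in> B \<Longrightarrow> T y b \<le> SY y"
    unfolding SY_def using T0 fin by (intro member_le_sum[where f = "\<lambda>b. T _ b"]) auto
  have TleRB: "\<And>y b. y \<in> Y \<Longrightarrow> b \<in> B \<Longrightarrow> T y b \<le> RB b"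
    unfolding F1[symmetric] using T0 fin by (intro member_le_sum[where f = "\<lambda>y. T y _"]) auto
  have SYleM: "\<And>y. y \<in> Y \<Longrightarrow> SY y \<le> M"
    unfolding F6[symmetric] using SY0 fin by (intro member_le_sum) auto
  have RBleM: "\<And>b. b \<in> B \<Longrightarrow> RB b \<le> M"
    unfolding M_def using RB0 fin by (intro member_le_sum) auto
  have RleRB: "\<And>a b. a \<in> A \<Longrightarrow> b \<in> B \<Longrightarrow> R a b \<le> RB b"
    unfolding RB_def using R0 fin by (intro member_le_sum[where f = "\<lambda>a. R a _"]) auto

  have E1: "Dt (Y \<times> Z) S Q = Dt Y SY Q1f + (\<Sum>y\<in>Y. Dt Z (\<lambda>z. S (y,z)) Q2f)"
  proof -
    have "Dt (Y \<times> Z) S Q = (\<Sum>y\<in>Y. \<Sum>z\<in>Z. S (y,z) * ln (S (y,z) / (M * (Q1f y * Q2f z))))"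
      unfolding Dt_eq[OF MS] sum_pair F4 ..
    also have "\<dots> = (\<Sum>y\<in>Y. \<Sum>z\<in>Z. S (y,z) * ln (S (y,z) / (SY y * Q2f z)) + S (y,z) * ln (SY y / (M * Q1f y)))"
    proof (intro sum.cong refl xln_split)
      fix y z assume y: "y \<in> Y" and z: "z \<in> Z"
      show "0 \<le> S (y,z)" using S0 y z .
      assume "0 < S (y,z)"
      then have "0 < SY y" "0 < M" using SleSY[OF y z] SYleM[OF y] by auto
      then show "0 < M * (Q1f y * Q2f z) \<and> 0 < SY y * Q2f z \<and> SY y * Q2f z / (M * (Q1f y * Q2f z)) = SY y / (M * Q1f y)"
        using Q10[OF y] Q20[OF z] by simp
    qed
    also have "\<dots> = (\<Sum>y\<in>Y. \<Sum>z\<in>Z. S (y,z) * ln (S (y,z) / (SY y * Q2f z))) + (\<Sum>y\<in>Y. SY y * ln (SY y / (M * Q1f y)))"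
      by (simp add: sum.distrib sum_distrib_right[symmetric] F5)
    also have "(\<Sum>y\<in>Y. \<Sum>z\<in>Z. S (y,z) * ln (S (y,z) / (SY y * Q2f z))) = (\<Sum>y\<in>Y. Dt Z (\<lambda>z. S (y,z)) Q2f)"
      by (intro sum.cong refl) (simp add: Dt_eq F5)
    also have "(\<Sum>y\<in>Y. SY y * ln (SY y / (M * Q1f y))) = Dt Y SY Q1f"
      by (simp add: Dt_eq F6)
    finally show ?thesis by simp
  qed
  have E2: "\<And>y. y \<in> Y \<Longrightarrow> Dt Z (\<lambda>z. S (y,z)) Q2f \<le> c * Dt B (T y) P2"
  proof -
    fix y assume y: "y \<in> Y"
    show "Dt Z (\<lambda>z. S (y,z)) Q2f \<le> c * Dt B (T y) P2"
      using S2 T0[OF y] unfolding sdpi_def Sch Q2f_def by blast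
  qed
  define I where "I = (\<Sum>y\<in>Y. \<Sum>b\<in>B. T y b * ln (T y b / (SY y * RB b / M)))"
  have E3: "(\<Sum>y\<in>Y. Dt B (T y) P2) = I + Dt B RB P2"
  proof -
    have "(\<Sum>y\<in>Y. Dt B (T y) P2) = (\<Sum>y\<in>Y. \<Sum>b\<in>B. T y b * ln (T y b / (SY y * P2 b)))"
      by (intro sum.cong refl) (simp add: Dt_eq SY_def)
    also have "\<dots> = (\<Sum>y\<in>Y. \<Sum>b\<in>B. T y b * ln (T y b / (SY y * RB b / M)) + T y b * ln (RB b / (M * P2 b)))"
    proof (intro sum.cong refl xln_split)
      fix y b assume y: "y \<in> Y" and b: "b \<in> B"
      show "0 \<le> T y b" using T0 y b .
      assume "0 < T y b"
      then have "0 < SY y" "0 < RB b" "0 < M" using TleSY[OF y b] TleRB[OF y b] RBleM[OF b] by auto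
      then show "0 < SY y * P2 b \<and> 0 < SY y * RB b / M \<and> SY y * RB b / M / (SY y * P2 b) = RB b / (M * P2 b)"
        using P20[OF b] by simp
    qed
    also have "\<dots> = I + (\<Sum>b\<in>B. \<Sum>y\<in>Y. T y b * ln (RB b / (M * P2 b)))"
      unfolding I_def by (simp add: sum.distrib sum.swap[of _ B Y])
    also have "(\<Sum>b\<in>B. \<Sum>y\<in>Y. T y b * ln (RB b / (M * P2 b))) = Dt B RB P2"
      by (simp add: sum_distrib_right[symmetric] F1 Dt_eq M_def)
    finally show ?thesis .
  qed
  have I0: "0 \<le> I"
  proof -
    have "(\<Sum>y\<in>Y. \<Sum>b\<in>B. T y b - SY y * RB b / M) \<le> I"
      unfolding I_def
    proof (intro sum_mono gibbs_term)
      fix y b assume y: "y \<in> Y" and b: "b \<in> B"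
      show "0 \<le> T y b" using T0 y b .
      show "0 \<le> SY y * RB b / M" using SY0[OF y] RB0[OF b] RBleM[OF b] by simp
      assume "0 < T y b"
      then have "0 < SY y" "0 < RB b" "0 < M" using TleSY[OF y b] TleRB[OF y b] RBleM[OF b] by auto
      then show "0 < SY y * RB b / M" by simp
    qed
    moreover have "(\<Sum>y\<in>Y. \<Sum>b\<in>B. T y b - SY y * RB b / M) = M - M * M / M"
    proof -
      have a: "(\<Sum>y\<in>Y. \<Sum>b\<in>B. T y b) = M" using F6 unfolding SY_def .
      have b: "(\<Sum>y\<in>Y. \<Sum>b\<in>B. SY y * RB b / M) = M * M / M"
      proof -
        have "(\<Sum>y\<in>Y. \<Sum>b\<in>B. SY y * RB b / M) = (\<Sum>y\<in>Y. SY y * (M / M))"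
          by (intro sum.cong refl) (simp add: M_def sum_distrib_left[symmetric] sum_divide_distrib[symmetric])
        also have "\<dots> = M * (M / M)" by (simp add: sum_distrib_right[symmetric] F6)
        finally show ?thesis by simp
      qed
      show ?thesis using a b by (simp add: sum_subtractf)
    qed
    moreover have "M - M * M / M = 0" by (cases "M = 0") simp_all
    ultimately show ?thesis by simp
  qed
  have E5: "Dt Y SY Q1f + I = (\<Sum>b\<in>B. Dt Y (\<lambda>y. T y b) Q1f)"
  proof -
    have "(\<Sum>b\<in>B. Dt Y (\<lambda>y. T y b) Q1f) = (\<Sum>b\<in>B. \<Sum>y\<in>Y. T y b * ln (T y b / (RB b * Q1f y)))"
      by (intro sum.cong refl) (simp add: Dt_eq F1)
    also have "\<dots> = (\<Sum>b\<in>B. \<Sum>y\<in>Y. T y b * ln (T y b / (SY y * RB b / M)) + T y b * ln (SY y / (M * Q1f y)))"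
    proof (intro sum.cong refl xln_split)
      fix y b assume b: "b \<in> B" and y: "y \<in> Y"
      show "0 \<le> T y b" using T0 y b .
      assume "0 < T y b"
      then have "0 < SY y" "0 < RB b" "0 < M" using TleSY[OF y b] TleRB[OF y b] RBleM[OF b] by auto
      then show "0 < RB b * Q1f y \<and> 0 < SY y * RB b / M \<and> SY y * RB b / M / (RB b * Q1f y) = SY y / (M * Q1f y)"
        using Q10[OF y] by simp
    qed
    also have "\<dots> = I + (\<Sum>y\<in>Y. \<Sum>b\<in>B. T y b * ln (SY y / (M * Q1f y)))"
      unfolding I_def by (simp add: sum.distrib sum.swap[of _ B Y])
    also have "(\<Sum>y\<in>Y. \<Sum>b\<in>B. T y b * ln (SY y / (M * Q1f y))) = Dt Y SY Q1f"
    proof -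
      have "(\<Sum>y\<in>Y. \<Sum>b\<in>B. T y b * ln (SY y / (M * Q1f y))) = (\<Sum>y\<in>Y. SY y * ln (SY y / (M * Q1f y)))"
        apply (rule sum.cong[OF refl])
        unfolding SY_def by (rule sum_distrib_right[symmetric])
      then show ?thesis unfolding Dt_eq[OF F6] .
    qed
    finally show ?thesis by simp
  qed
  have E6: "\<And>b. b \<in> B \<Longrightarrow> Dt Y (\<lambda>y. T y b) Q1f \<le> c * Dt A (\<lambda>a. R a b) P1"
  proof -
    fix b assume b: "b \<in> B"
    have "\<And>a. a \<in> A \<Longrightarrow> 0 \<le> R a b" using R0 b by auto
    from S1[unfolded sdpi_def, rule_format, OF this]
    have "Dt Y (channel_out A W1 (\<lambda>a. R a b)) (channel_out A W1 P1) \<le> c * Dt A (\<lambda>a. R a b) P1" .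
    then show "Dt Y (\<lambda>y. T y b) Q1f \<le> c * Dt A (\<lambda>a. R a b) P1"
      by (simp only: Tch Q1f_def)
  qed
  have E7: "(\<Sum>b\<in>B. Dt A (\<lambda>a. R a b) P1) + Dt B RB P2 = Dt (A \<times> B) r P"
  proof -
    have "Dt (A \<times> B) r P = (\<Sum>b\<in>B. \<Sum>a\<in>A. R a b * ln (R a b / (M * (P1 a * P2 b))))"
      unfolding Dt_eq[OF Mr] sum_pair P_def R_def by (subst sum.swap) simp
    also have "\<dots> = (\<Sum>b\<in>B. \<Sum>a\<in>A. R a b * ln (R a b / (RB b * P1 a)) + R a b * ln (RB b / (M * P2 b)))"
    proof (intro sum.cong refl xln_split)
      fix a b assume b: "b \<in> B" and a: "a \<in> A"
      show "0 \<le> R a b" using R0 a b .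
      assume "0 < R a b"
      then have "0 < RB b" "0 < M" using RleRB[OF a b] RBleM[OF b] by auto
      then show "0 < M * (P1 a * P2 b) \<and> 0 < RB b * P1 a \<and> RB b * P1 a / (M * (P1 a * P2 b)) = RB b / (M * P2 b)"
        using P10[OF a] P20[OF b] by simp
    qed
    also have "\<dots> = (\<Sum>b\<in>B. \<Sum>a\<in>A. R a b * ln (R a b / (RB b * P1 a))) + (\<Sum>b\<in>B. \<Sum>a\<in>A. R a b * ln (RB b / (M * P2 b)))"
      by (simp only: sum.distrib)
    also have "(\<Sum>b\<in>B. \<Sum>a\<in>A. R a b * ln (R a b / (RB b * P1 a))) = (\<Sum>b\<in>B. Dt A (\<lambda>a. R a b) P1)"
      by (rule sum.cong[OF refl], rule Dt_eq[symmetric]) (simp add: RB_def)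
    also have "(\<Sum>b\<in>B. \<Sum>a\<in>A. R a b * ln (RB b / (M * P2 b))) = (\<Sum>b\<in>B. RB b * ln (RB b / (M * P2 b)))"
      by (rule sum.cong[OF refl]) (simp only: RB_def sum_distrib_right)
    also have "\<dots> = Dt B RB P2" by (rule Dt_eq[symmetric]) (simp add: M_def)
    finally show ?thesis by simp
  qed
  have "Dt (Y \<times> Z) S Q = Dt Y SY Q1f + (\<Sum>y\<in>Y. Dt Z (\<lambda>z. S (y,z)) Q2f)" by (rule E1)
  also have "\<dots> \<le> Dt Y SY Q1f + (\<Sum>y\<in>Y. c * Dt B (T y) P2)"
    using E2 by (intro add_left_mono sum_mono) auto
  also have "\<dots> = Dt Y SY Q1f + c * I + c * Dt B RB P2"
    by (simp add: sum_distrib_left[symmetric] E3 distrib_left)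
  also have "\<dots> \<le> Dt Y SY Q1f + I + c * Dt B RB P2"
    using mult_nonneg_nonneg[of "1 - c" I] I0 c1 by (simp add: algebra_simps)
  also have "\<dots> = (\<Sum>b\<in>B. Dt Y (\<lambda>y. T y b) Q1f) + c * Dt B RB P2" using E5 by simp
  also have "\<dots> \<le> (\<Sum>b\<in>B. c * Dt A (\<lambda>a. R a b) P1) + c * Dt B RB P2"
    using E6 by (intro add_right_mono sum_mono) auto
  also have "\<dots> = c * Dt (A \<times> B) r P" using E7 by (simp add: sum_distrib_left[symmetric] distrib_left[symmetric])
  finally show "Dt (Y \<times> Z) (channel_out (A \<times> B) (\<lambda>(a, b) (y, z). W1 a y * W2 b z) r)
           (channel_out (A \<times> B) (\<lambda>(a, b) (y, z). W1 a y * W2 b z) (\<lambda>(a, b). P1 a * P2 b)) \<le> c * Dt (A \<times> B) r (\<lambda>(a, b). P1 a * P2 b)"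
    unfolding S_def Q_def W_def P_def .
qed

lemma finite_seqs: "finite (seqs n :: ('a::finite) list set)"
  unfolding seqs_def using finite_lists_length_eq[of "UNIV :: 'a set" n] by simp

lemma cons_bij: "bij_betw (\<lambda>(x,xs). x # xs) (UNIV \<times> seqs n) (seqs (Suc n))"
proof (rule bij_betwI')
  fix u v :: "'a \<times> 'a list" show "((case u of (x, xs) \<Rightarrow> x # xs) = (case v of (x, xs) \<Rightarrow> x # xs)) = (u = v)"
    by (cases u; cases v) auto
next
  fix u :: "'a \<times> 'a list" assume "u \<in> UNIV \<times> seqs n"
  then show "(case u of (x, xs) \<Rightarrow> x # xs) \<in> seqs (Suc n)" by (cases u) (auto simp: seqs_def)
next
  fix l :: "'a list" assume "l \<in> seqs (Suc n)"
  then show "\<exists>u\<in>UNIV \<times> seqs n. l = (case u of (x, xs) \<Rightarrow> x # xs)"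
    by (cases l) (auto simp: seqs_def)
qed

lemma sum_seqs_Suc:
  "(\<Sum>u\<in>seqs (Suc n). f u) = (\<Sum>x\<in>UNIV. \<Sum>xs\<in>seqs n. f (x # xs))"
proof -
  have "(\<Sum>u\<in>seqs (Suc n). f u) = (\<Sum>p\<in>UNIV \<times> seqs n. f (case p of (x, xs) \<Rightarrow> x # xs))"
    using sum.reindex_bij_betw[OF cons_bij, of f n] by simp
  also have "\<dots> = (\<Sum>x\<in>UNIV. \<Sum>xs\<in>seqs n. f (x # xs))" by (simp add: sum_pair)
  finally show ?thesis .
qed

lemma seqs_0: "seqs 0 = {[]}" unfolding seqs_def by auto

lemma iid_input_Cons: "iid_input P (Suc n) (x # xs) = marg_X P x * iid_input P n xs"
  unfolding iid_input_def prod.lessThan_Suc_shift by simp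

lemma iid_channel_Cons:
  "iid_channel P (Suc n) (x # xs) (y # ys) = P x y / marg_X P x * iid_channel P n xs ys"
  unfolding iid_channel_def prod.lessThan_Suc_shift by simp

lemma Dt_reindex:
  assumes "bij_betw h U' U"
  shows "Dt U f p = Dt U' (\<lambda>u. f (h u)) (\<lambda>u. p (h u))"
proof -
  have "sum f U = sum (\<lambda>u. f (h u)) U'" using sum.reindex_bij_betw[OF assms, of f] by simp
  then show ?thesis unfolding Dt_def using sum.reindex_bij_betw[OF assms, of "\<lambda>u. f u * ln (f u / (sum f U * p u))"]
    by simp
qed

lemma sdpi_transport:
  assumes h: "bij_betw h U' U" and k: "bij_betw k V' V"
    and S: "sdpi U' V' (\<lambda>u. P (h u)) (\<lambda>u v. W (h u) (k v)) c"
  shows "sdpi U V P W c"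
  unfolding sdpi_def
proof (intro allI impI)
  fix r :: "_ \<Rightarrow> real" assume r: "\<forall>u\<in>U. 0 \<le> r u"
  have r': "\<forall>u\<in>U'. 0 \<le> r (h u)" using r h by (auto simp: bij_betw_def)
  have co: "\<And>f v. channel_out U W f (k v) = channel_out U' (\<lambda>u v. W (h u) (k v)) (\<lambda>u. f (h u)) v"
  proof -
    fix f v show "channel_out U W f (k v) = channel_out U' (\<lambda>u v. W (h u) (k v)) (\<lambda>u. f (h u)) v"
      unfolding channel_out_def using sum.reindex_bij_betw[OF h, of "\<lambda>u. W u (k v) * f u"] by simp
  qed
  have "Dt V (channel_out U W r) (channel_out U W P)
      = Dt V' (\<lambda>v. channel_out U W r (k v)) (\<lambda>v. channel_out U W P (k v))"
    by (rule Dt_reindex[OF k])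
  also have "\<dots> = Dt V' (channel_out U' (\<lambda>u v. W (h u) (k v)) (\<lambda>u. r (h u)))
                         (channel_out U' (\<lambda>u v. W (h u) (k v)) (\<lambda>u. P (h u)))"
    by (simp only: co)
  also have "\<dots> \<le> c * Dt U' (\<lambda>u. r (h u)) (\<lambda>u. P (h u))"
    using S[unfolded sdpi_def, rule_format, of "\<lambda>u. r (h u)"] r' by blast
  also have "\<dots> = c * Dt U r P" using Dt_reindex[OF h, of r P] by simp
  finally show "Dt V (channel_out U W r) (channel_out U W P) \<le> c * Dt U r P" .
qed

locale jointP =
  fixes P :: "'a::finite \<Rightarrow> 'b::finite \<Rightarrow> real"
  assumes P0: "\<And>x y. 0 \<le> P x y"
    and PX: "\<And>x. marg_X P x > 0"
    and PY: "\<And>y. marg_Y P y > 0"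
begin

definition W1 :: "'a \<Rightarrow> 'b \<Rightarrow> real" where "W1 x y = P x y / marg_X P x"

lemma iid_input_pos: "iid_input P n xs > 0"
  unfolding iid_input_def using PX by (intro prod_pos) auto

lemma iid_channel_nonneg: "iid_channel P n xs ys \<ge> 0"
  unfolding iid_channel_def using PX P0 by (intro prod_nonneg) (auto intro: divide_nonneg_pos)

lemma W1_nonneg: "W1 x y \<ge> 0" unfolding W1_def using PX P0 by (auto intro: divide_nonneg_pos)

lemma W1_sum: "(\<Sum>y\<in>UNIV. W1 x y) = 1"
  unfolding W1_def using PX[of x] by (simp add: sum_divide_distrib[symmetric] marg_X_def)

lemma stoch_W1: "stoch UNIV UNIV W1"
  unfolding stoch_def using W1_nonneg W1_sum by auto

lemma out_W1: "channel_out UNIV W1 (marg_X P) y = marg_Y P y"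
  unfolding channel_out_def W1_def marg_Y_def using PX by (intro sum.cong refl) (simp add: less_imp_neq[symmetric])

lemma iid_channel_sum: "xs \<in> seqs n \<Longrightarrow> (\<Sum>ys\<in>seqs n. iid_channel P n xs ys) = 1"
proof (induction n arbitrary: xs)
  case 0
  then show ?case by (simp add: seqs_0 iid_channel_def)
next
  case (Suc n)
  then obtain x xs' where xs: "xs = x # xs'" "xs' \<in> seqs n" by (cases xs) (auto simp: seqs_def)
  have "(\<Sum>ys\<in>seqs (Suc n). iid_channel P (Suc n) xs ys)
      = (\<Sum>y\<in>UNIV. \<Sum>ys\<in>seqs n. W1 x y * iid_channel P n xs' ys)"
    unfolding sum_seqs_Suc xs iid_channel_Cons W1_def ..
  also have "\<dots> = (\<Sum>y\<in>UNIV. W1 x y)" by (simp add: sum_distrib_left[symmetric] Suc.IH[OF xs(2)])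
  also have "\<dots> = 1" by (rule W1_sum)
  finally show ?case .
qed

lemma stoch_iid: "stoch (seqs n) (seqs n) (iid_channel P n)"
  unfolding stoch_def using iid_channel_nonneg iid_channel_sum by auto

lemma out_iid: "ys \<in> seqs n \<Longrightarrow> channel_out (seqs n) (iid_channel P n) (iid_input P n) ys = (\<Prod>i<n. marg_Y P (ys ! i))"
proof (induction n arbitrary: ys)
  case 0
  then show ?case by (simp add: seqs_0 iid_channel_def iid_input_def channel_out_def)
next
  case (Suc n)
  then obtain y ys' where ys: "ys = y # ys'" "ys' \<in> seqs n" by (cases ys) (auto simp: seqs_def)
  have "channel_out (seqs (Suc n)) (iid_channel P (Suc n)) (iid_input P (Suc n)) ys
      = (\<Sum>x\<in>UNIV. \<Sum>xs\<in>seqs n. (W1 x y * marg_X P x) * (iid_channel P n xs ys' * iid_input P n xs))"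
    unfolding channel_out_def sum_seqs_Suc ys iid_channel_Cons iid_input_Cons W1_def
    using PX by (simp add: algebra_simps less_imp_neq[symmetric])
  also have "\<dots> = (\<Sum>x\<in>UNIV. W1 x y * marg_X P x) * channel_out (seqs n) (iid_channel P n) (iid_input P n) ys'"
    unfolding channel_out_def sum_product ..
  also have "(\<Sum>x\<in>UNIV. W1 x y * marg_X P x) = marg_Y P y"
    using out_W1[of y] unfolding channel_out_def by simp
  finally show ?case using Suc.IH[OF ys(2)] ys(1) unfolding prod.lessThan_Suc_shift by simp
qed

lemma out_iid_pos: "ys \<in> seqs n \<Longrightarrow> channel_out (seqs n) (iid_channel P n) (iid_input P n) ys > 0"
  unfolding out_iid using PY by (intro prod_pos) auto

lemma Dt_single: "p u = 1 \<Longrightarrow> Dt {u} f p = 0"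
  unfolding Dt_def by (cases "f u = 0") simp_all

lemma sdpi_iid:
  assumes c1: "c \<le> 1" and S1: "sdpi UNIV UNIV (marg_X P) W1 c"
  shows "sdpi (seqs n) (seqs n) (iid_input P n) (iid_channel P n) c"
proof (induction n)
  case 0
  have Pin: "iid_input P 0 [] = 1" by (simp add: iid_input_def)
  have Pout: "channel_out (seqs 0) (iid_channel P 0) (iid_input P 0) [] = 1"
    by (simp add: seqs_0 iid_channel_def iid_input_def channel_out_def)
  show ?case unfolding sdpi_def seqs_0 using Dt_single[of "iid_input P 0", OF Pin]
      Dt_single[of "channel_out {[]} (iid_channel P 0) (iid_input P 0)"] Pout
    by (simp add: seqs_0)
next
  case (Suc n)
  have prod: "sdpi (UNIV \<times> seqs n) (UNIV \<times> seqs n) (\<lambda>(a,b). marg_X P a * iid_input P n b)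
      (\<lambda>(a,b) (y,z). W1 a y * iid_channel P n b z) c"
  proof (rule sdpi_prod)
    show "finite (UNIV :: 'a set)" "finite (seqs n :: 'a list set)" "finite (UNIV :: 'b set)" "finite (seqs n :: 'b list set)"
      by (simp_all add: finite_seqs)
    show "stoch UNIV UNIV W1" by (rule stoch_W1)
    show "stoch (seqs n) (seqs n) (iid_channel P n)" by (rule stoch_iid)
    show "\<forall>a\<in>UNIV. 0 < marg_X P a" using PX by simp
    show "\<forall>b\<in>seqs n. 0 < iid_input P n b" using iid_input_pos by simp
    show "\<forall>y\<in>UNIV. 0 < channel_out UNIV W1 (marg_X P) y" using out_W1 PY by simp
    show "\<forall>z\<in>seqs n. 0 < channel_out (seqs n) (iid_channel P n) (iid_input P n) z" using out_iid_pos by simp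
  qed (use S1 Suc.IH c1 in auto)
  have eqP: "(\<lambda>u. iid_input P (Suc n) ((\<lambda>(x,xs). x # xs) u)) = (\<lambda>(a,b). marg_X P a * iid_input P n b)"
    by (auto simp: iid_input_Cons)
  have eqW: "(\<lambda>u v. iid_channel P (Suc n) ((\<lambda>(x,xs). x # xs) u) ((\<lambda>(x,xs). x # xs) v))
      = (\<lambda>(a,b) (y,z). W1 a y * iid_channel P n b z)"
    apply (intro ext)
    subgoal for u v by (cases u; cases v) (simp add: iid_channel_Cons W1_def)
    done
  show ?case
    by (rule sdpi_transport[OF cons_bij cons_bij]) (unfold eqP eqW, rule prod)
qed

end

lemma phi_lim0: "((\<lambda>u::real. ((1+u)*ln(1+u) - u)/u^2) \<longlongrightarrow> 1/2) (at 0)"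
  by real_asymp

lemma phi_term_lim:
  fixes q j :: real assumes q: "q > 0"
  shows "((\<lambda>t. q * ((1 + t*j/q) * ln (1 + t*j/q) - t*j/q) / t^2) \<longlongrightarrow> j^2 / q / 2) (at_right 0)"
proof (cases "j = 0")
  case True then show ?thesis by simp
next
  case False
  define a where "a = j / q"
  have a0: "a \<noteq> 0" using False q by (simp add: a_def)
  have g: "filterlim (\<lambda>t::real. t * a) (at 0) (at_right 0)"
  proof (rule filterlim_atI)
    have "((\<lambda>t::real. t * a) \<longlongrightarrow> 0 * a) (at_right 0)" by (intro tendsto_intros)
    then show "((\<lambda>t::real. t * a) \<longlongrightarrow> 0) (at_right 0)" by simp
    show "\<forall>\<^sub>F t in at_right 0. t * a \<noteq> 0" using a0 eventually_at_right_less[of 0] 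
      by (auto simp: eventually_at_right_field intro: exI[of _ 1])
  qed
  have l1: "((\<lambda>t. ((1 + t*a)*ln(1 + t*a) - t*a)/(t*a)^2) \<longlongrightarrow> 1/2) (at_right 0)"
    using filterlim_compose[OF phi_lim0 g] by simp
  have l2: "((\<lambda>t. (j^2 / q) * (((1 + t*a)*ln(1 + t*a) - t*a)/(t*a)^2)) \<longlongrightarrow> j^2 / q / 2) (at_right 0)"
    using tendsto_mult[OF tendsto_const l1, of "j^2/q"] by simp
  show ?thesis
  proof (rule Lim_transform_eventually[OF l2])
    show "\<forall>\<^sub>F t in at_right 0. (j^2 / q) * (((1 + t*a)*ln(1 + t*a) - t*a)/(t*a)^2)
        = q * ((1 + t*j/q) * ln (1 + t*j/q) - t*j/q) / t^2"
      unfolding eventually_at_right_field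
    proof (intro exI[of _ 1] conjI allI impI)
      fix t :: real assume "0 < t" "t < 1"
      then have t: "t \<noteq> 0" by simp
      have "t * j / q = t * a" by (simp add: a_def)
      moreover have "j = a * q" using q by (simp add: a_def)
      ultimately show "(j^2 / q) * (((1 + t*a)*ln(1 + t*a) - t*a)/(t*a)^2)
        = q * ((1 + t*j/q) * ln (1 + t*j/q) - t*j/q) / t^2"
        using t a0 q by (simp add: field_simps power2_eq_square)
    qed simp
  qed
qed

lemma kl_lim:
  assumes fin: "finite V" and Q: "\<forall>v\<in>V. Q v > 0" and J: "sum J V = 0"
  shows "((\<lambda>t. KLr V (\<lambda>v. Q v + t * J v) Q / t^2) \<longlongrightarrow> (\<Sum>v\<in>V. (J v)^2 / Q v) / 2) (at_right 0)"
proof -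
  have eq: "KLr V (\<lambda>v. Q v + t * J v) Q / t^2 = (\<Sum>v\<in>V. Q v * ((1 + t * J v / Q v) * ln (1 + t * J v / Q v) - t * J v / Q v) / t^2)" for t
  proof -
    have "\<And>v. v \<in> V \<Longrightarrow> (Q v + t * J v) * ln ((Q v + t * J v) / Q v)
        = Q v * ((1 + t * J v / Q v) * ln (1 + t * J v / Q v) - t * J v / Q v) + t * J v"
    proof -
      fix v assume "v \<in> V"
      then have q: "Q v > 0" using Q by auto
      define u where "u = t * J v / Q v"
      have e1: "(Q v + t * J v) / Q v = 1 + u" using q by (simp add: field_simps u_def)
      have e2: "Q v + t * J v = Q v * (1 + u)" using q by (simp add: field_simps u_def)
      have e3: "Q v * u = t * J v" using q by (simp add: u_def)
      have "(Q v + t * J v) * ln ((Q v + t * J v) / Q v) = (Q v + t * J v) * ln (1 + u)"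
        by (simp only: e1)
      also have "\<dots> = Q v * (1 + u) * ln (1 + u)" by (simp only: e2)
      also have "\<dots> = Q v * ((1 + u) * ln (1 + u) - u) + t * J v"
        using e3 by (simp add: right_diff_distrib)
      finally show "(Q v + t * J v) * ln ((Q v + t * J v) / Q v)
        = Q v * ((1 + t * J v / Q v) * ln (1 + t * J v / Q v) - t * J v / Q v) + t * J v"
        by (simp only: u_def)
    qed
    then have "KLr V (\<lambda>v. Q v + t * J v) Q = (\<Sum>v\<in>V. Q v * ((1 + t * J v / Q v) * ln (1 + t * J v / Q v) - t * J v / Q v) + t * J v)"
      unfolding KLr_def by (rule sum.cong[OF refl])
    also have "\<dots> = (\<Sum>v\<in>V. Q v * ((1 + t * J v / Q v) * ln (1 + t * J v / Q v) - t * J v / Q v)) + t * sum J V"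
      by (simp only: sum.distrib sum_distrib_left)
    finally show ?thesis using J by (simp only: sum_divide_distrib mult_zero_right add_0_right)
  qed
  have "((\<lambda>t. \<Sum>v\<in>V. Q v * ((1 + t * J v / Q v) * ln (1 + t * J v / Q v) - t * J v / Q v) / t^2)
      \<longlongrightarrow> (\<Sum>v\<in>V. (J v)^2 / Q v / 2)) (at_right 0)"
    by (rule tendsto_sum, rule phi_term_lim) (use Q in auto)
  then show ?thesis unfolding eq by (simp add: sum_divide_distrib)
qed

lemma channel_out_lin:
  "channel_out U W (\<lambda>u. f u + t * g u) v = channel_out U W f v + t * channel_out U W g v"
  unfolding channel_out_def by (simp add: sum.distrib sum_distrib_left algebra_simps)

lemma chi_le_kl_local:
  fixes Pn :: "'u \<Rightarrow> real" and W :: "'u \<Rightarrow> 'v \<Rightarrow> real"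
  assumes fin: "finite U" "finite V" and W: "stoch U V W" and Pn: "pospmf U Pn"
    and Qp: "\<forall>v\<in>V. channel_out U W Pn v > 0"
    and R: "is_pmf U R" and Bpos: "CHr U R Pn > 0"
  shows "ereal (CHr V (channel_out U W R) (channel_out U W Pn) / CHr U R Pn) \<le> eta_KL U V Pn W"
proof -
  define Q where "Q = channel_out U W Pn"
  define J where "J = (\<lambda>u. R u - Pn u)"
  define JO where "JO = channel_out U W J"
  have Pn0: "\<forall>u\<in>U. Pn u > 0" and Pns: "sum Pn U = 1" using Pn by (auto simp: pospmf_def)
  have R0: "\<forall>u\<in>U. R u \<ge> 0" and Rs: "sum R U = 1" using R by (auto simp: is_pmf_def)
  have sumJ: "sum J U = 0" unfolding J_def using Pns Rs by (simp add: sum_subtractf)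
  have sumJO: "sum JO V = 0" unfolding JO_def using channel_out_mass[OF fin(2,1)[THEN conjI[THEN conjunct2]] ] sumJ
    by (metis channel_out_mass fin W)
  have lin: "\<And>t. channel_out U W (\<lambda>u. Pn u + t * J u) = (\<lambda>v. Q v + t * JO v)"
    unfolding Q_def JO_def by (rule ext) (rule channel_out_lin)
  have RJ: "R = (\<lambda>u. Pn u + 1 * J u)" unfolding J_def by auto
  have outR: "channel_out U W R = (\<lambda>v. Q v + 1 * JO v)" using lin[of 1] RJ by simp
  define A where "A = (\<Sum>v\<in>V. (JO v)^2 / Q v)"
  define B where "B = (\<Sum>u\<in>U. (J u)^2 / Pn u)"
  have CHo: "CHr V (channel_out U W R) Q = A" unfolding CHr_def A_def outR by simp
  have CHi: "CHr U R Pn = B" unfolding CHr_def B_def J_def ..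
  have B0: "B > 0" using Bpos CHi by simp
  have Q0: "\<forall>v\<in>V. Q v > 0" using Qp Q_def by simp
  define fi where "fi = (\<lambda>t. KLr U (\<lambda>u. Pn u + t * J u) Pn)"
  define fo where "fo = (\<lambda>t. KLr V (\<lambda>v. Q v + t * JO v) Q)"
  have Li: "((\<lambda>t. fi t / t^2) \<longlongrightarrow> B / 2) (at_right 0)"
    unfolding fi_def B_def by (rule kl_lim[OF fin(1) Pn0 sumJ])
  have Lo: "((\<lambda>t. fo t / t^2) \<longlongrightarrow> A / 2) (at_right 0)"
    unfolding fo_def A_def by (rule kl_lim[OF fin(2) Q0 sumJO])
  have Lr: "((\<lambda>t. (fo t / t^2) / (fi t / t^2)) \<longlongrightarrow> (A / 2) / (B / 2)) (at_right 0)"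
    by (rule tendsto_divide[OF Lo Li]) (use B0 in simp)
  have Le: "((\<lambda>t. ereal ((fo t / t^2) / (fi t / t^2))) \<longlongrightarrow> ereal ((A / 2) / (B / 2))) (at_right 0)"
    by (rule tendsto_ereal[OF Lr])
  have ev1: "\<forall>\<^sub>F t in at_right 0. 0 < fi t / t^2"
    using order_tendstoD(1)[OF Li] B0 by simp
  have ev2: "\<forall>\<^sub>F t in at_right (0::real). 0 < t \<and> t < 1"
    unfolding eventually_at_right_field by (intro exI[of _ 1]) auto
  have "\<forall>\<^sub>F t in at_right 0. ereal ((fo t / t^2) / (fi t / t^2)) \<le> eta_KL U V Pn W"
    using ev1 ev2
  proof eventually_elim
    case (elim t)
    then have t: "0 < t" "t < 1" and fi0: "0 < fi t" by (auto simp: zero_less_divide_iff)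
    define Rt where "Rt = (\<lambda>u. Pn u + t * J u)"
    have Rt_pmf: "is_pmf U Rt"
    proof -
      have "\<forall>u\<in>U. 0 \<le> Rt u"
      proof
        fix u assume u: "u \<in> U"
        have "Rt u = (1 - t) * Pn u + t * R u" unfolding Rt_def J_def by (simp add: algebra_simps)
        moreover have "0 \<le> (1 - t) * Pn u" using t Pn0 u by (simp add: less_imp_le)
        moreover have "0 \<le> t * R u" using t R0 u by simp
        ultimately show "0 \<le> Rt u" by simp
      qed
      moreover have "sum Rt U = 1" unfolding Rt_def using Pns sumJ
        by (simp add: sum.distrib sum_distrib_left[symmetric])
      ultimately show ?thesis by (simp add: is_pmf_def)
    qed
    have ki: "kl_div U Rt Pn = ereal (fi t)" unfolding fi_def Rt_def by (rule kl_div_eq[OF Pn0])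
    have ko: "kl_div V (channel_out U W Rt) (channel_out U W Pn) = ereal (fo t)"
      unfolding fo_def Rt_def lin Q_def[symmetric] by (rule kl_div_eq[OF Q0])
    have eqr: "(fo t / t^2) / (fi t / t^2) = fo t / fi t" using t by simp
    have mem: "ereal (fo t / fi t) \<in> {kl_div V (channel_out U W R) (channel_out U W Pn) / kl_div U R Pn
      | R. is_pmf U R \<and> 0 < kl_div U R Pn \<and> kl_div U R Pn < \<infinity>}"
      unfolding mem_Collect_eq
    proof (intro exI[of _ Rt] conjI)
      show "ereal (fo t / fi t) = kl_div V (channel_out U W Rt) (channel_out U W Pn) / kl_div U Rt Pn"
        unfolding ki ko using fi0 by (simp add: ereal_divide)
      show "is_pmf U Rt" by (rule Rt_pmf)
      show "0 < kl_div U Rt Pn" unfolding ki using fi0 by simp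
      show "kl_div U Rt Pn < \<infinity>" unfolding ki by simp
    qed
    show ?case unfolding eqr eta_KL_def by (rule Sup_upper[OF mem])
  qed
  then have "ereal ((A / 2) / (B / 2)) \<le> eta_KL U V Pn W"
    by (intro tendsto_upperbound[OF Le]) simp_all
  moreover have "(A / 2) / (B / 2) = CHr V (channel_out U W R) (channel_out U W Pn) / CHr U R Pn"
    using CHo CHi Q_def by simp
  ultimately show ?thesis by simp
qed

locale jointP2 = jointP +
  assumes Psum: "(\<Sum>x\<in>UNIV. \<Sum>y\<in>UNIV. P x y) = 1"
begin

lemma PX_pmf: "pospmf UNIV (marg_X P)"
  unfolding pospmf_def using PX Psum by (simp add: marg_X_def)

lemma PY_pmf: "pospmf UNIV (marg_Y P)"
proof -
  have "(\<Sum>y\<in>UNIV. marg_Y P y) = (\<Sum>x\<in>UNIV. \<Sum>y\<in>UNIV. P x y)" unfolding marg_Y_def by (rule sum.swap)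
  then show ?thesis unfolding pospmf_def using PY Psum by simp
qed

lemma iid_input_sum: "(\<Sum>xs\<in>seqs n. iid_input P n xs) = 1"
proof (induction n)
  case 0 then show ?case by (simp add: seqs_0 iid_input_def)
next
  case (Suc n)
  have "(\<Sum>xs\<in>seqs (Suc n). iid_input P (Suc n) xs) = (\<Sum>x\<in>UNIV. marg_X P x * (\<Sum>xs\<in>seqs n. iid_input P n xs))"
    unfolding sum_seqs_Suc iid_input_Cons by (simp add: sum_distrib_left)
  also have "\<dots> = 1" using Suc.IH PX_pmf by (simp add: pospmf_def)
  finally show ?case .
qed

lemma Pn_pmf: "pospmf (seqs n) (iid_input P n)"
  unfolding pospmf_def using iid_input_pos iid_input_sum by auto

lemma out_Suc_general:
  "channel_out (seqs (Suc k)) (iid_channel P (Suc k)) f (y # ys)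
    = (\<Sum>x\<in>UNIV. \<Sum>xs\<in>seqs k. W1 x y * iid_channel P k xs ys * f (x # xs))"
  unfolding channel_out_def sum_seqs_Suc iid_channel_Cons W1_def ..

lemma Qk_sum: "(\<Sum>ys\<in>seqs k. channel_out (seqs k) (iid_channel P k) (iid_input P k) ys) = 1"
  using channel_out_mass[OF finite_seqs finite_seqs stoch_iid] iid_input_sum by simp

lemma embed:
  assumes r: "is_pmf UNIV r"
  shows "\<exists>R. is_pmf (seqs (Suc k)) R
     \<and> CHr (seqs (Suc k)) R (iid_input P (Suc k)) = CHr UNIV r (marg_X P)
     \<and> CHr (seqs (Suc k)) (channel_out (seqs (Suc k)) (iid_channel P (Suc k)) R)
            (channel_out (seqs (Suc k)) (iid_channel P (Suc k)) (iid_input P (Suc k)))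
       = CHr UNIV (channel_out UNIV W1 r) (marg_Y P)"
proof -
  define R where "R = (\<lambda>l. r (hd l) * iid_input P k (tl l))"
  define Qk where "Qk = channel_out (seqs k) (iid_channel P k) (iid_input P k)"
  define o1 where "o1 = channel_out UNIV W1 r"
  have r0: "\<And>x. 0 \<le> r x" and rs: "sum r UNIV = 1" using r by (auto simp: is_pmf_def)
  have PXs: "sum (marg_X P) UNIV = 1" using PX_pmf by (simp add: pospmf_def)
  have Rc: "\<And>x xs. R (x # xs) = r x * iid_input P k xs" unfolding R_def by simp
  have pmf: "is_pmf (seqs (Suc k)) R"
  proof -
    have "\<forall>u\<in>seqs (Suc k). 0 \<le> R u" unfolding R_def using r0 iid_input_pos by (metis less_imp_le mult_nonneg_nonneg)
    moreover have "sum R (seqs (Suc k)) = 1"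
      unfolding sum_seqs_Suc Rc by (simp add: sum_distrib_left[symmetric] iid_input_sum rs)
    ultimately show ?thesis by (simp add: is_pmf_def)
  qed
  have chi_in: "CHr (seqs (Suc k)) R (iid_input P (Suc k)) = CHr UNIV r (marg_X P)"
  proof -
    have "CHr (seqs (Suc k)) R (iid_input P (Suc k))
        = (\<Sum>x\<in>UNIV. \<Sum>xs\<in>seqs k. (r x - marg_X P x)^2 / marg_X P x * iid_input P k xs)"
      unfolding CHr_def sum_seqs_Suc Rc iid_input_Cons
    proof (intro sum.cong refl)
      fix x xs
      have "iid_input P k xs > 0" "marg_X P x > 0" using iid_input_pos PX by auto
      then show "(r x * iid_input P k xs - marg_X P x * iid_input P k xs)^2 / (marg_X P x * iid_input P k xs)
          = (r x - marg_X P x)^2 / marg_X P x * iid_input P k xs"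
        by (simp add: power2_eq_square field_simps)
    qed
    also have "\<dots> = (\<Sum>x\<in>UNIV. (r x - marg_X P x)^2 / marg_X P x * (\<Sum>xs\<in>seqs k. iid_input P k xs))"
      by (simp only: sum_distrib_left)
    also have "\<dots> = CHr UNIV r (marg_X P)"
      unfolding CHr_def iid_input_sum by simp
    finally show ?thesis .
  qed
  have outR: "\<And>y ys. channel_out (seqs (Suc k)) (iid_channel P (Suc k)) R (y # ys) = o1 y * Qk ys"
  proof -
    fix y ys
    have "channel_out (seqs (Suc k)) (iid_channel P (Suc k)) R (y # ys)
        = (\<Sum>x\<in>UNIV. \<Sum>xs\<in>seqs k. W1 x y * iid_channel P k xs ys * (r x * iid_input P k xs))"
      by (simp only: out_Suc_general Rc)
    also have "\<dots> = o1 y * Qk ys"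
      unfolding o1_def Qk_def channel_out_def sum_product
      by (intro sum.cong refl) (simp add: algebra_simps)
    finally show "channel_out (seqs (Suc k)) (iid_channel P (Suc k)) R (y # ys) = o1 y * Qk ys" .
  qed
  have outP: "\<And>y ys. channel_out (seqs (Suc k)) (iid_channel P (Suc k)) (iid_input P (Suc k)) (y # ys) = marg_Y P y * Qk ys"
  proof -
    fix y ys
    have "channel_out (seqs (Suc k)) (iid_channel P (Suc k)) (iid_input P (Suc k)) (y # ys)
        = (\<Sum>x\<in>UNIV. \<Sum>xs\<in>seqs k. W1 x y * iid_channel P k xs ys * (marg_X P x * iid_input P k xs))"
      by (simp only: out_Suc_general iid_input_Cons)
    also have "\<dots> = channel_out UNIV W1 (marg_X P) y * Qk ys"
      unfolding Qk_def channel_out_def sum_product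
      by (intro sum.cong refl) (simp add: algebra_simps)
    finally show "channel_out (seqs (Suc k)) (iid_channel P (Suc k)) (iid_input P (Suc k)) (y # ys) = marg_Y P y * Qk ys"
      by (simp add: out_W1)
  qed
  have chi_out: "CHr (seqs (Suc k)) (channel_out (seqs (Suc k)) (iid_channel P (Suc k)) R)
            (channel_out (seqs (Suc k)) (iid_channel P (Suc k)) (iid_input P (Suc k)))
       = CHr UNIV o1 (marg_Y P)"
  proof -
    have "CHr (seqs (Suc k)) (channel_out (seqs (Suc k)) (iid_channel P (Suc k)) R)
            (channel_out (seqs (Suc k)) (iid_channel P (Suc k)) (iid_input P (Suc k)))
        = (\<Sum>y\<in>UNIV. \<Sum>ys\<in>seqs k. (o1 y - marg_Y P y)^2 / marg_Y P y * Qk ys)"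
      unfolding CHr_def sum_seqs_Suc outR outP
    proof (intro sum.cong refl)
      fix y :: 'b and ys :: "'b list" assume ys: "ys \<in> seqs k"
      have "Qk ys > 0" "marg_Y P y > 0" using out_iid_pos[OF ys] PY by (auto simp: Qk_def)
      then show "(o1 y * Qk ys - marg_Y P y * Qk ys)^2 / (marg_Y P y * Qk ys)
          = (o1 y - marg_Y P y)^2 / marg_Y P y * Qk ys"
        by (simp add: power2_eq_square field_simps)
    qed
    also have "\<dots> = (\<Sum>y\<in>UNIV. (o1 y - marg_Y P y)^2 / marg_Y P y * (\<Sum>ys\<in>seqs k. Qk ys))"
      by (simp only: sum_distrib_left)
    also have "\<dots> = CHr UNIV o1 (marg_Y P)"
      unfolding CHr_def Qk_def Qk_sum by simp
    finally show ?thesis .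
  qed
  show ?thesis using pmf chi_in chi_out unfolding o1_def by blast
qed

lemma sdpi_single:
  assumes e: "e \<ge> 0" and m: "m > 0" "\<And>x. m \<le> marg_X P x"
    and H: "\<And>r. is_pmf UNIV r \<Longrightarrow> CHr UNIV (channel_out UNIV W1 r) (marg_Y P) \<le> e * CHr UNIV r (marg_X P)"
  shows "sdpi UNIV UNIV (marg_X P) W1 (min 1 (e / m))"
proof (rule sdpi_from_pmf)
  show "finite (UNIV :: 'a set)" "finite (UNIV :: 'b set)" by simp_all
  show "stoch UNIV UNIV W1" by (rule stoch_W1)
  show "\<forall>u\<in>UNIV. 0 < marg_X P u" using PX by simp
  show "\<forall>v\<in>UNIV. 0 < channel_out UNIV W1 (marg_X P) v" using PY out_W1 by simp
  fix r :: "'a \<Rightarrow> real" assume r: "is_pmf UNIV r"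
  have outPX: "channel_out UNIV W1 (marg_X P) = marg_Y P" by (rule ext) (rule out_W1)
  have r0: "\<forall>u\<in>UNIV. 0 \<le> r u" and rs: "sum r UNIV = 1" using r by (auto simp: is_pmf_def)
  have o_pmf: "is_pmf UNIV (channel_out UNIV W1 r)"
    unfolding is_pmf_def using channel_out_nonneg[OF stoch_W1 r0] channel_out_mass[OF _ _ stoch_W1, of r] rs
    by simp
  have K0: "0 \<le> KLr UNIV r (marg_X P)" by (rule KLr_nonneg[OF _ r PX_pmf]) simp
  have dpi1: "KLr UNIV (channel_out UNIV W1 r) (marg_Y P) \<le> KLr UNIV r (marg_X P)"
  proof -
    have "Dt UNIV (channel_out UNIV W1 r) (channel_out UNIV W1 (marg_X P)) \<le> Dt UNIV r (marg_X P)"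
      by (rule dpi) (use PX r0 stoch_W1 in auto)
    moreover have "sum (channel_out UNIV W1 r) UNIV = 1"
      using channel_out_mass[OF _ _ stoch_W1, of r] rs by simp
    ultimately show ?thesis unfolding outPX Dt_def KLr_def using rs by simp
  qed
  have b: "KLr UNIV (channel_out UNIV W1 r) (marg_Y P) \<le> e / m * KLr UNIV r (marg_X P)"
  proof -
    have "KLr UNIV (channel_out UNIV W1 r) (marg_Y P) \<le> CHr UNIV (channel_out UNIV W1 r) (marg_Y P)"
      by (rule KLr_le_CHr[OF _ o_pmf PY_pmf]) simp
    also have "\<dots> \<le> e * CHr UNIV r (marg_X P)" by (rule H[OF r])
    also have "\<dots> \<le> e * (KLr UNIV r (marg_X P) / m)"
      by (rule mult_left_mono[OF CHr_le_KLr[OF _ r PX_pmf m(1)] e]) (use m in simp_all)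
    finally show ?thesis by simp
  qed
  show "KLr UNIV (channel_out UNIV W1 r) (channel_out UNIV W1 (marg_X P)) \<le> min 1 (e / m) * KLr UNIV r (marg_X P)"
    unfolding outPX
  proof (cases "1 \<le> e / m")
    case True then show "KLr UNIV (channel_out UNIV W1 r) (marg_Y P) \<le> min 1 (e / m) * KLr UNIV r (marg_X P)"
      using dpi1 by simp
  next
    case False then show "KLr UNIV (channel_out UNIV W1 r) (marg_Y P) \<le> min 1 (e / m) * KLr UNIV r (marg_X P)"
      using b by simp
  qed
qed

end

lemma Dt_pmf: "sum r U = 1 \<Longrightarrow> Dt U r p = KLr U r p"
  unfolding Dt_def KLr_def by simp

theorem corollary1:
  fixes P :: "'a::finite \<Rightarrow> 'b::finite \<Rightarrow> real" and n :: nat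
  assumes "CARD('a) \<ge> 2" and "CARD('b) \<ge> 2"
    and "\<forall>x y. 0 \<le> P x y" and "(\<Sum>x\<in>UNIV. \<Sum>y\<in>UNIV. P x y) = 1"
    and "\<forall>x. marg_X P x > 0" and "\<forall>y. marg_Y P y > 0"
    and "n \<ge> 1"
  shows "eta_chi2 (seqs n) (seqs n) (iid_input P n) (iid_channel P n)
           \<le> eta_KL (seqs n) (seqs n) (iid_input P n) (iid_channel P n)
       \<and> eta_KL (seqs n) (seqs n) (iid_input P n) (iid_channel P n)
           \<le> eta_chi2 (seqs n) (seqs n) (iid_input P n) (iid_channel P n)
               / ereal (Min (range (marg_X P)))"
proof -
  interpret jointP2 P using assms(3-6) by unfold_locales auto
  obtain k where n: "n = Suc k" using assms(7) by (cases n) auto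
  have Pn0: "\<forall>u\<in>seqs n. iid_input P n u > 0" using iid_input_pos by simp
  have Qp: "\<forall>v\<in>seqs n. channel_out (seqs n) (iid_channel P n) (iid_input P n) v > 0"
    using out_iid_pos by simp
  have part1: "eta_chi2 (seqs n) (seqs n) (iid_input P n) (iid_channel P n)
           \<le> eta_KL (seqs n) (seqs n) (iid_input P n) (iid_channel P n)"
    unfolding eta_chi2_def
  proof (rule Sup_least)
    fix z assume "z \<in> {chi2_div (seqs n) (channel_out (seqs n) (iid_channel P n) R) (channel_out (seqs n) (iid_channel P n) (iid_input P n)) /
              chi2_div (seqs n) R (iid_input P n) |
              R. is_pmf (seqs n) R \<and> 0 < chi2_div (seqs n) R (iid_input P n) \<and> chi2_div (seqs n) R (iid_input P n) < \<infinity>}"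
    then obtain R where z: "z = chi2_div (seqs n) (channel_out (seqs n) (iid_channel P n) R) (channel_out (seqs n) (iid_channel P n) (iid_input P n)) /
              chi2_div (seqs n) R (iid_input P n)" and R: "is_pmf (seqs n) R"
        and pos: "0 < chi2_div (seqs n) R (iid_input P n)" by blast
    have ci: "chi2_div (seqs n) R (iid_input P n) = ereal (CHr (seqs n) R (iid_input P n))"
      by (rule chi2_div_eq[OF Pn0])
    have co: "chi2_div (seqs n) (channel_out (seqs n) (iid_channel P n) R) (channel_out (seqs n) (iid_channel P n) (iid_input P n))
        = ereal (CHr (seqs n) (channel_out (seqs n) (iid_channel P n) R) (channel_out (seqs n) (iid_channel P n) (iid_input P n)))"
      by (rule chi2_div_eq[OF Qp])
    have cpos: "CHr (seqs n) R (iid_input P n) > 0" using pos ci by simp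
    have "z = ereal (CHr (seqs n) (channel_out (seqs n) (iid_channel P n) R) (channel_out (seqs n) (iid_channel P n) (iid_input P n))
        / CHr (seqs n) R (iid_input P n))"
      using z ci co cpos by (simp add: ereal_divide)
    then show "z \<le> eta_KL (seqs n) (seqs n) (iid_input P n) (iid_channel P n)"
      using chi_le_kl_local[OF finite_seqs finite_seqs stoch_iid Pn_pmf Qp R cpos] by simp
  qed
  define E where "E = eta_chi2 (seqs n) (seqs n) (iid_input P n) (iid_channel P n)"
  define m where "m = Min (range (marg_X P))"
  have m_in: "m \<in> range (marg_X P)" unfolding m_def by (rule Min_in) auto
  have m0: "m > 0" using m_in PX by auto
  have mle: "\<And>x. m \<le> marg_X P x" unfolding m_def by (rule Min_le) auto
  have claimA: "ereal (CHr UNIV (channel_out UNIV W1 r) (marg_Y P) / CHr UNIV r (marg_X P)) \<le> E"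
    if r: "is_pmf UNIV r" and rp: "CHr UNIV r (marg_X P) > 0" for r
  proof -
    obtain R where R: "is_pmf (seqs (Suc k)) R"
      and ci: "CHr (seqs (Suc k)) R (iid_input P (Suc k)) = CHr UNIV r (marg_X P)"
      and co: "CHr (seqs (Suc k)) (channel_out (seqs (Suc k)) (iid_channel P (Suc k)) R)
            (channel_out (seqs (Suc k)) (iid_channel P (Suc k)) (iid_input P (Suc k)))
       = CHr UNIV (channel_out UNIV W1 r) (marg_Y P)"
      using embed[OF r, of k] by blast
    have Pn0': "\<forall>u\<in>seqs (Suc k). iid_input P (Suc k) u > 0" using iid_input_pos by simp
    have Qp': "\<forall>v\<in>seqs (Suc k). channel_out (seqs (Suc k)) (iid_channel P (Suc k)) (iid_input P (Suc k)) v > 0"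
      using out_iid_pos by simp
    have mem: "ereal (CHr UNIV (channel_out UNIV W1 r) (marg_Y P) / CHr UNIV r (marg_X P))
       \<in> {chi2_div (seqs (Suc k)) (channel_out (seqs (Suc k)) (iid_channel P (Suc k)) R) (channel_out (seqs (Suc k)) (iid_channel P (Suc k)) (iid_input P (Suc k))) /
              chi2_div (seqs (Suc k)) R (iid_input P (Suc k)) |
              R. is_pmf (seqs (Suc k)) R \<and> 0 < chi2_div (seqs (Suc k)) R (iid_input P (Suc k)) \<and> chi2_div (seqs (Suc k)) R (iid_input P (Suc k)) < \<infinity>}"
      unfolding mem_Collect_eq
    proof (intro exI[of _ R] conjI)
      show "is_pmf (seqs (Suc k)) R" by (rule R)
      show "0 < chi2_div (seqs (Suc k)) R (iid_input P (Suc k))"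
        unfolding chi2_div_eq[OF Pn0'] ci using rp by simp
      show "chi2_div (seqs (Suc k)) R (iid_input P (Suc k)) < \<infinity>"
        unfolding chi2_div_eq[OF Pn0'] by simp
      show "ereal (CHr UNIV (channel_out UNIV W1 r) (marg_Y P) / CHr UNIV r (marg_X P)) =
          chi2_div (seqs (Suc k)) (channel_out (seqs (Suc k)) (iid_channel P (Suc k)) R) (channel_out (seqs (Suc k)) (iid_channel P (Suc k)) (iid_input P (Suc k))) /
              chi2_div (seqs (Suc k)) R (iid_input P (Suc k))"
        unfolding chi2_div_eq[OF Pn0'] chi2_div_eq[OF Qp'] ci co using rp by (simp add: ereal_divide)
    qed
    show ?thesis unfolding E_def eta_chi2_def n by (rule Sup_upper[OF mem])
  qed
  obtain x0 x1 :: 'a where x01: "x0 \<noteq> x1"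
  proof -
    have "\<exists>x0 x1 :: 'a. x0 \<noteq> x1"
    proof (rule ccontr)
      assume "\<not> (\<exists>x0 x1 :: 'a. x0 \<noteq> x1)"
      then have "(UNIV :: 'a set) = {undefined}" by auto
      then have "card (UNIV :: 'a set) = card {undefined :: 'a}" by (rule arg_cong)
      then show False using assms(1) by simp
    qed
    then show ?thesis using that by blast
  qed
  define r0 where "r0 = (\<lambda>x. if x = x0 then 1 else 0 :: real)"
  have r0_pmf: "is_pmf UNIV r0" unfolding is_pmf_def r0_def by simp
  have r0_pos: "CHr UNIV r0 (marg_X P) > 0"
  proof -
    have "(r0 x1 - marg_X P x1)^2 / marg_X P x1 \<le> CHr UNIV r0 (marg_X P)"
      unfolding CHr_def using PX by (intro member_le_sum) (auto intro: divide_nonneg_pos)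
    moreover have "(r0 x1 - marg_X P x1)^2 / marg_X P x1 > 0" unfolding r0_def using x01 PX[of x1] by simp
    ultimately show ?thesis by simp
  qed
  have E0: "E \<ge> 0"
  proof -
    have "0 \<le> CHr UNIV (channel_out UNIV W1 r0) (marg_Y P) / CHr UNIV r0 (marg_X P)"
      using CHr_nonneg[of UNIV "marg_Y P"] PY r0_pos by simp
    then show ?thesis using claimA[OF r0_pmf r0_pos] by (metis ereal_less_eq(5) order_trans)
  qed
  have part2: "eta_KL (seqs n) (seqs n) (iid_input P n) (iid_channel P n) \<le> E / ereal m"
  proof (cases E)
    case (real e)
    have e0: "e \<ge> 0" using E0 real by simp
    have H: "CHr UNIV (channel_out UNIV W1 r) (marg_Y P) \<le> e * CHr UNIV r (marg_X P)"
      if r: "is_pmf UNIV r" for r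
    proof (cases "CHr UNIV r (marg_X P) = 0")
      case True
      have "\<And>x. r x = marg_X P x" using CHr_zero[of UNIV "marg_X P" r] True PX by auto
      then have "r = marg_X P" by (rule ext)
      then have "channel_out UNIV W1 r = marg_Y P" using out_W1 by auto
      then show ?thesis using True by (simp add: CHr_def)
    next
      case False
      then have rp: "CHr UNIV r (marg_X P) > 0" using CHr_nonneg[of UNIV "marg_X P" r] PX by simp
      have "ereal (CHr UNIV (channel_out UNIV W1 r) (marg_Y P) / CHr UNIV r (marg_X P)) \<le> ereal e"
        using claimA[OF r rp] real by simp
      then have "CHr UNIV (channel_out UNIV W1 r) (marg_Y P) / CHr UNIV r (marg_X P) \<le> e" by simp
      then show ?thesis using rp by (simp add: pos_divide_le_eq)
    qed
    define c where "c = min 1 (e / m)"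
    have S1: "sdpi UNIV UNIV (marg_X P) W1 c" unfolding c_def by (rule sdpi_single[OF e0 m0 mle H])
    have Sn: "sdpi (seqs n) (seqs n) (iid_input P n) (iid_channel P n) c"
      by (rule sdpi_iid[OF _ S1]) (simp add: c_def)
    have "eta_KL (seqs n) (seqs n) (iid_input P n) (iid_channel P n) \<le> ereal c"
      unfolding eta_KL_def
    proof (rule Sup_least)
      fix z assume "z \<in> {kl_div (seqs n) (channel_out (seqs n) (iid_channel P n) R) (channel_out (seqs n) (iid_channel P n) (iid_input P n)) /
              kl_div (seqs n) R (iid_input P n) |
              R. is_pmf (seqs n) R \<and> 0 < kl_div (seqs n) R (iid_input P n) \<and> kl_div (seqs n) R (iid_input P n) < \<infinity>}"
      then obtain R where z: "z = kl_div (seqs n) (channel_out (seqs n) (iid_channel P n) R) (channel_out (seqs n) (iid_channel P n) (iid_input P n)) /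
              kl_div (seqs n) R (iid_input P n)" and R: "is_pmf (seqs n) R"
          and pos: "0 < kl_div (seqs n) R (iid_input P n)" by blast
      have ki: "kl_div (seqs n) R (iid_input P n) = ereal (KLr (seqs n) R (iid_input P n))"
        by (rule kl_div_eq[OF Pn0])
      have ko: "kl_div (seqs n) (channel_out (seqs n) (iid_channel P n) R) (channel_out (seqs n) (iid_channel P n) (iid_input P n))
          = ereal (KLr (seqs n) (channel_out (seqs n) (iid_channel P n) R) (channel_out (seqs n) (iid_channel P n) (iid_input P n)))"
        by (rule kl_div_eq[OF Qp])
      have kpos: "KLr (seqs n) R (iid_input P n) > 0" using pos ki by simp
      have R0: "\<forall>u\<in>seqs n. 0 \<le> R u" and Rs: "sum R (seqs n) = 1" using R by (auto simp: is_pmf_def)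
      have oRs: "sum (channel_out (seqs n) (iid_channel P n) R) (seqs n) = 1"
        using channel_out_mass[OF finite_seqs finite_seqs stoch_iid, where r = R] Rs by simp
      have "Dt (seqs n) (channel_out (seqs n) (iid_channel P n) R) (channel_out (seqs n) (iid_channel P n) (iid_input P n))
          \<le> c * Dt (seqs n) R (iid_input P n)"
        using Sn R0 unfolding sdpi_def by blast
      then have "KLr (seqs n) (channel_out (seqs n) (iid_channel P n) R) (channel_out (seqs n) (iid_channel P n) (iid_input P n))
          \<le> c * KLr (seqs n) R (iid_input P n)"
        unfolding Dt_pmf[OF Rs] Dt_pmf[OF oRs] .
      then have "KLr (seqs n) (channel_out (seqs n) (iid_channel P n) R) (channel_out (seqs n) (iid_channel P n) (iid_input P n))
          / KLr (seqs n) R (iid_input P n) \<le> c"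
        using kpos by (simp add: pos_divide_le_eq)
      then show "z \<le> ereal c" unfolding z ki ko using kpos by (simp add: ereal_divide)
    qed
    also have "ereal c \<le> ereal (e / m)" unfolding c_def by simp
    also have "ereal (e / m) = E / ereal m" using real m0 by (simp add: ereal_divide)
    finally show ?thesis .
  next
    case PInf
    then have "E / ereal m = \<infinity>" using m0 by (simp add: ereal_divide_eq)
    then show ?thesis by simp
  next
    case MInf
    then show ?thesis using E0 by simp
  qed
  show ?thesis using part1 part2 unfolding E_def m_def by simp
qed

end
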